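(* Let $p\in(0,1/2)$ and $x>2$. Let $(\xi_n)_{n\geq1}$ be i.i.d. with $\mathbf{P}(\xi_1=1)=p=1-\mathbf{P}(\xi_1=-1)$ and let $\mathcal{F}_n:=\sigma(\xi_1,\dots,\xi_n)$. Set $W_0:=x$, $B_1:=1$, $W_n:=W_{n-1}+\xi_nB_n$, $B_{n+1}:=B_n2^{\xi_n}$ for $n\geq1$, and $X_n:=W_n/B_{n+1}-2$ for $n\in\mathbb{N}$ (so $X_0=x-2$). Let $$R:=\max\left\{2,\ \frac{2p}{(1-2p)\log2}+1\right\}.$$ (i) The process defined by $M_0:=0$ and $$M_n:=\sum_{j=1}^n\left(\log X_j-\log X_{j-1}-\left(\tfrac12-p\right)\log2\right)\mathbf{1}_{\{X_{j-1}\geq R\}},\quad n\geq1,$$ is a submartingale with respect to $(\mathcal{F}_n)$ and satisfies $|M_n-M_{n-1}|\leq(5\log2)/2$ for all $n\geq1$. (ii) For $k\geq1$ let $T_k:=\#\{1\leq j\leq k: X_j\geq R\}$. There exist positive constants $C$ and $\beta$, independent of $x$, $p$ and $k$, such that for all $k\geq1$, $$\mathbf{P}\left(T_k>\tfrac{3k}{4},\ X_n\leq0\text{ for some }n\geq k\right)\leq\frac{C}{(1-2p)^2}e^{-\beta(1-2p)^3k}.$$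
   Context: The summand in $M_n$ is interpreted as $0$ when $X_{j-1}<R$; when $X_{j-1}\geq R$ one has $X_j>0$ so the logarithms are defined. *)

theory Defs
  imports "HOL-Probability.Probability"
begin

text \<open>Betting model. The increments are indexed from 1: s 1, s 2, ...; s 0 is unused.
  bet s n = B_(n+1), with B_1 = 1 and B_(n+1) = B_n * 2 powr xi_n.\<close>
fun bet :: "(nat \<Rightarrow> real) \<Rightarrow> nat \<Rightarrow> real" where
  "bet s 0 = 1"
| "bet s (Suc n) = bet s n * 2 powr (s (Suc n))"

fun wealth :: "(nat \<Rightarrow> real) \<Rightarrow> real \<Rightarrow> nat \<Rightarrow> real" where
  "wealth s x 0 = x"
| "wealth s x (Suc n) = wealth s x n + s (Suc n) * bet s n"

definition Xproc :: "(nat \<Rightarrow> real) \<Rightarrow> real \<Rightarrow> nat \<Rightarrow> real" where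
  "Xproc s x n = wealth s x n / bet s n - 2"

definition Rconst :: "real \<Rightarrow> real" where
  "Rconst p = max 2 (2 * p / ((1 - 2 * p) * ln 2) + 1)"

definition Mproc :: "real \<Rightarrow> (nat \<Rightarrow> real) \<Rightarrow> real \<Rightarrow> nat \<Rightarrow> real" where
  "Mproc p s x n = (\<Sum>j\<in>{1..n}.
     (if Xproc s x (j - 1) \<ge> Rconst p
      then ln (Xproc s x j) - ln (Xproc s x (j - 1)) - (1/2 - p) * ln 2 else 0))"

definition Tcount :: "real \<Rightarrow> (nat \<Rightarrow> real) \<Rightarrow> real \<Rightarrow> nat \<Rightarrow> nat" where
  "Tcount p s x k = card {j\<in>{1..k}. Xproc s x j \<ge> Rconst p}"

definition nat_filt :: "'a measure \<Rightarrow> (nat \<Rightarrow> 'a \<Rightarrow> real) \<Rightarrow> nat \<Rightarrow> 'a measure" where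
  "nat_filt M \<xi> n = sigma (space M)
     {\<xi> j -` A \<inter> space M | j A. j \<in> {1..n} \<and> A \<in> sets borel}"

definition submartingale :: "'a measure \<Rightarrow> (nat \<Rightarrow> 'a measure) \<Rightarrow> (nat \<Rightarrow> 'a \<Rightarrow> real) \<Rightarrow> bool" where
  "submartingale M F Y \<longleftrightarrow>
     (\<forall>n. subalgebra M (F n)) \<and> (\<forall>n. sets (F n) \<subseteq> sets (F (Suc n))) \<and>
     (\<forall>n. integrable M (Y n)) \<and> (\<forall>n. Y n \<in> borel_measurable (F n)) \<and>
     (\<forall>n. AE \<omega> in M. Y n \<omega> \<le> real_cond_exp M (F n) (Y (Suc n)) \<omega>)"

definition bet_setup :: "'a measure \<Rightarrow> real \<Rightarrow> real \<Rightarrow> (nat \<Rightarrow> 'a \<Rightarrow> real) \<Rightarrow> bool" where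
  "bet_setup M p x \<xi> \<longleftrightarrow>
     prob_space M \<and> 0 < p \<and> p < 1/2 \<and> x > 2 \<and>
     (\<forall>n\<ge>1. \<xi> n \<in> borel_measurable M) \<and>
     prob_space.indep_vars M (\<lambda>_. borel) \<xi> {1..} \<and>
     (\<forall>n\<ge>1. measure M {\<omega>\<in>space M. \<xi> n \<omega> = 1} = p \<and>
             measure M {\<omega>\<in>space M. \<xi> n \<omega> = -1} = 1 - p)"

end

theory Submission
  imports Defs
begin



lemma filt_space[simp]: "space (nat_filt M \<xi> n) = space M"
  unfolding nat_filt_def by (rule space_measure_of) blast

lemma filt_sets: "sets (nat_filt M \<xi> n) = sigma_sets (space M)
     {\<xi> j -` A \<inter> space M | j A. j \<in> {1..n} \<and> A \<in> sets borel}"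
  unfolding nat_filt_def by (rule sets_measure_of) blast

lemma filt_mono: assumes "m \<le> n" shows "sets (nat_filt M \<xi> m) \<subseteq> sets (nat_filt M \<xi> n)"
  unfolding filt_sets
proof (intro sigma_sets_mono' subsetI)
  fix X assume "X \<in> {\<xi> j -` A \<inter> space M | j A. j \<in> {1..m} \<and> A \<in> sets borel}"
  then obtain j A where jA: "X = \<xi> j -` A \<inter> space M" "j \<in> {1..m}" "A \<in> sets borel" by blast
  then have "j \<in> {1..n}" using assms by simp
  with jA show "X \<in> {\<xi> j -` A \<inter> space M | j A. j \<in> {1..n} \<and> A \<in> sets borel}" by blast
qed

lemma filt_sub:
  assumes "\<And>j. j \<ge> 1 \<Longrightarrow> \<xi> j \<in> borel_measurable M"
  shows "sets (nat_filt M \<xi> n) \<subseteq> sets M"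
  unfolding filt_sets
proof (rule sets.sigma_sets_subset, rule subsetI)
  fix X assume "X \<in> {\<xi> j -` A \<inter> space M | j A. j \<in> {1..n} \<and> A \<in> sets borel}"
  then obtain j A where jA: "X = \<xi> j -` A \<inter> space M" "j \<in> {1..n}" "A \<in> sets borel" by blast
  have "\<xi> j \<in> borel_measurable M" using assms jA(2) by simp
  from measurable_sets[OF this jA(3)] show "X \<in> sets M" using jA(1) by simp
qed

lemma filt_subalg:
  assumes "\<And>j. j \<ge> 1 \<Longrightarrow> \<xi> j \<in> borel_measurable M"
  shows "subalgebra M (nat_filt M \<xi> n)"
  unfolding subalgebra_def using filt_sub[of \<xi> M n, OF assms] by simp

lemma filt_subalg2: "m \<le> n \<Longrightarrow> subalgebra (nat_filt M \<xi> n) (nat_filt M \<xi> m)"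
  unfolding subalgebra_def using filt_mono[of m n M \<xi>] by simp

lemma xi_meas_filt:
  assumes "1 \<le> j" "j \<le> n"
  shows "\<xi> j \<in> borel_measurable (nat_filt M \<xi> n)"
proof (rule measurableI)
  fix A :: "real set" assume "A \<in> sets borel"
  have jn: "j \<in> {1..n}" using assms by simp
  have "\<xi> j -` A \<inter> space M \<in> {\<xi> j -` A \<inter> space M | j A. j \<in> {1..n} \<and> A \<in> sets borel}"
    by (rule CollectI, rule exI[of _ j], rule exI[of _ A]) (use assms \<open>A \<in> sets borel\<close> in simp)
  then show "\<xi> j -` A \<inter> space (nat_filt M \<xi> n) \<in> sets (nat_filt M \<xi> n)"
    unfolding filt_sets filt_space by (rule sigma_sets.Basic)
next
  fix \<omega> show "\<xi> j \<omega> \<in> space borel" by simp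
qed

lemma meas_filt_mono: "f \<in> borel_measurable (nat_filt M \<xi> m) \<Longrightarrow> m \<le> n \<Longrightarrow> f \<in> borel_measurable (nat_filt M \<xi> n)"
  by (rule measurable_from_subalg[OF filt_subalg2[of m n M \<xi>]])

lemma bs_prob: "bet_setup M p x \<xi> \<Longrightarrow> prob_space M"
  unfolding bet_setup_def by (elim conjE)
lemma bs_p0: "bet_setup M p x \<xi> \<Longrightarrow> 0 < p"
  unfolding bet_setup_def by (elim conjE)
lemma bs_p1: "bet_setup M p x \<xi> \<Longrightarrow> p < 1/2"
  unfolding bet_setup_def by (elim conjE)
lemma bs_x: "bet_setup M p x \<xi> \<Longrightarrow> x > 2"
  unfolding bet_setup_def by (elim conjE)
lemma bs_meas: "bet_setup M p x \<xi> \<Longrightarrow> n \<ge> 1 \<Longrightarrow> \<xi> n \<in> borel_measurable M"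
  unfolding bet_setup_def by (elim conjE allE impE)
lemma bs_ind: "bet_setup M p x \<xi> \<Longrightarrow> prob_space.indep_vars M (\<lambda>_. borel) \<xi> {1..}"
  unfolding bet_setup_def by (elim conjE)
lemma bs_m1: "bet_setup M p x \<xi> \<Longrightarrow> n \<ge> 1 \<Longrightarrow> measure M {\<omega>\<in>space M. \<xi> n \<omega> = 1} = p"
  unfolding bet_setup_def by (elim conjE allE impE conjE)
lemma bs_m2: "bet_setup M p x \<xi> \<Longrightarrow> n \<ge> 1 \<Longrightarrow> measure M {\<omega>\<in>space M. \<xi> n \<omega> = -1} = 1 - p"
  unfolding bet_setup_def by (elim conjE allE impE conjE)



lemma bet_pos: "bet s n > 0"
  by (induction n) auto

lemma X0: "Xproc s x 0 = x - 2"
  by (simp add: Xproc_def)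

lemma X_Suc: "Xproc s x (Suc n) = (Xproc s x n + 2 + s (Suc n)) / 2 powr s (Suc n) - 2"
proof -
  have b: "bet s n > 0" by (rule bet_pos)
  have t: "2 powr s (Suc n) > 0" by simp
  show ?thesis unfolding Xproc_def using b t by (simp add: field_simps)
qed

lemma X_Suc1: "s (Suc n) = 1 \<Longrightarrow> Xproc s x (Suc n) = (Xproc s x n - 1) / 2"
  by (simp add: X_Suc field_simps)

lemma X_Sucm1: "s (Suc n) = -1 \<Longrightarrow> Xproc s x (Suc n) = 2 * Xproc s x n"
  by (simp add: X_Suc powr_minus_divide field_simps)

definition stepf :: "real \<Rightarrow> real \<Rightarrow> real" where
  "stepf R v = (if v = -1 then ln 2 else - ln (2 * R / (R - 1)))"

definition Asum :: "real \<Rightarrow> (nat \<Rightarrow> real) \<Rightarrow> real \<Rightarrow> nat \<Rightarrow> real" where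
  "Asum R s x n = (\<Sum>j\<in>{1..n}. if R \<le> Xproc s x (j - 1) then stepf R (s j) else 0)"

definition Ncnt :: "real \<Rightarrow> (nat \<Rightarrow> real) \<Rightarrow> real \<Rightarrow> nat \<Rightarrow> nat" where
  "Ncnt R s x n = card {j\<in>{1..n}. R \<le> Xproc s x (j - 1)}"

definition Lsum :: "real \<Rightarrow> real \<Rightarrow> real \<Rightarrow> (nat \<Rightarrow> real) \<Rightarrow> real \<Rightarrow> nat \<Rightarrow> real" where
  "Lsum R \<theta> lm s x n = (\<Sum>j\<in>{1..n}. if R \<le> Xproc s x (j - 1) then lm - \<theta> * stepf R (s j) else 0)"

lemma Lsum_eq: "Lsum R \<theta> lm s x n = lm * real (Ncnt R s x n) - \<theta> * Asum R s x n"
proof -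
  let ?P = "\<lambda>j. R \<le> Xproc s x (j - 1)"
  have "Lsum R \<theta> lm s x n = (\<Sum>j\<in>{j\<in>{1..n}. ?P j}. lm - \<theta> * stepf R (s j))"
    unfolding Lsum_def by (subst sum.inter_filter) auto
  also have "\<dots> = lm * real (Ncnt R s x n) - \<theta> * (\<Sum>j\<in>{j\<in>{1..n}. ?P j}. stepf R (s j))"
    by (simp add: sum_subtractf sum_distrib_left Ncnt_def)
  also have "(\<Sum>j\<in>{j\<in>{1..n}. ?P j}. stepf R (s j)) = Asum R s x n"
    unfolding Asum_def by (subst sum.inter_filter) auto
  finally show ?thesis .
qed

lemma Asum_Suc: "Asum R s x (Suc n) = Asum R s x n + (if R \<le> Xproc s x n then stepf R (s (Suc n)) else 0)"
proof -
  have "{1..Suc n} = insert (Suc n) {1..n}" by auto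
  then show ?thesis unfolding Asum_def by simp
qed

lemma psi_bound:
  assumes R: "R \<ge> 2" and s: "\<And>j. j \<ge> 1 \<Longrightarrow> s j = 1 \<or> s j = -1"
  shows "ln R + Asum R s x n \<le> ln (max (Xproc s x n) R)"
proof (induction n)
  case 0
  have "ln R \<le> ln (max (Xproc s x 0) R)" using R by (intro ln_mono) auto
  then show ?case by (simp add: Asum_def)
next
  case (Suc n)
  show ?case
  proof (cases "R \<le> Xproc s x n")
    case True
    have mx: "max (Xproc s x n) R = Xproc s x n" using True by simp
    have Xp: "Xproc s x n > 0" using True R by simp
    have "s (Suc n) = 1 \<or> s (Suc n) = -1" using s by simp
    then show ?thesis
    proof
      assume s1: "s (Suc n) = 1"
      have st: "stepf R (s (Suc n)) = - ln (2 * R / (R - 1))" using s1 by (simp add: stepf_def)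
      have e: "Xproc s x (Suc n) = (Xproc s x n - 1) / 2" using X_Suc1[of s _ x, OF s1] .
      have ge: "Xproc s x n * ((R - 1) / (2 * R)) \<le> Xproc s x (Suc n)"
        unfolding e using True R by (simp add: field_simps)
      have pos: "Xproc s x n * ((R - 1) / (2 * R)) > 0" using Xp R by simp
      have "ln (Xproc s x n * ((R - 1) / (2 * R))) = ln (Xproc s x n) - ln (2 * R / (R - 1))"
        using Xp R by (simp add: ln_mult ln_div)
      moreover have "ln (Xproc s x n * ((R - 1) / (2 * R))) \<le> ln (max (Xproc s x (Suc n)) R)"
        using ge pos by (intro ln_mono) auto
      ultimately show ?thesis using Suc.IH True mx st by (simp add: Asum_Suc)
    next
      assume s1: "s (Suc n) = -1"
      have st: "stepf R (s (Suc n)) = ln 2" using s1 by (simp add: stepf_def)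
      have e: "Xproc s x (Suc n) = 2 * Xproc s x n" using X_Sucm1[of s _ x, OF s1] .
      have "max (Xproc s x (Suc n)) R = 2 * Xproc s x n" using e True R by simp
      then have "ln (max (Xproc s x (Suc n)) R) = ln 2 + ln (Xproc s x n)"
        using Xp by (simp add: ln_mult)
      then show ?thesis using Suc.IH True mx st by (simp add: Asum_Suc)
    qed
  next
    case False
    have "ln R \<le> ln (max (Xproc s x (Suc n)) R)" using R by (intro ln_mono) auto
    moreover have "max (Xproc s x n) R = R" using False by simp
    ultimately show ?thesis using Suc.IH False by (simp add: Asum_Suc)
  qed
qed

lemma absorb:
  assumes s: "\<And>j. j \<ge> 1 \<Longrightarrow> s j = 1 \<or> s j = -1" and "Xproc s x n \<le> 0" "n \<le> m"
  shows "Xproc s x m \<le> 0"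
  using assms(3)
proof (induction m rule: dec_induct)
  case base
  then show ?case using assms(2) .
next
  case (step m)
  have "s (Suc m) = 1 \<or> s (Suc m) = -1" using s by simp
  then show ?case
  proof
    assume "s (Suc m) = 1" then show ?thesis using X_Suc1[of s m x] step.IH by simp
  next
    assume "s (Suc m) = -1" then show ?thesis using X_Sucm1[of s m x] step.IH by simp
  qed
qed

lemma ln_52: "ln (5/2::real) \<le> 1"
proof -
  have "1 + 1 + 1\<^sup>2/2 \<le> exp (1::real)" by (rule exp_lower_Taylor_quadratic) simp
  then have "5/2 \<le> exp (1::real)" by simp
  then show ?thesis by (metis exp_gt_zero ln_exp ln_le_cancel_iff zero_less_divide_iff zero_less_numeral)
qed

lemma pw_main:
  assumes R: "R \<ge> 2" and s: "\<And>j. j \<ge> 1 \<Longrightarrow> s j = 1 \<or> s j = -1"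
    and lam: "lm > 0" and th: "\<theta> > 0" and x: "x > 2"
    and T: "real (card {j\<in>{1..k}. R \<le> Xproc s x j}) > 3 * real k / 4"
    and ruin: "\<exists>n\<ge>k. Xproc s x n \<le> 0"
  shows "\<exists>\<sigma>. Lsum R \<theta> lm s x \<sigma> \<ge> lm * (3 * real k / 4 - 1) - \<theta>"
proof -
  obtain n0 where n0: "n0 \<ge> k" "Xproc s x n0 \<le> 0" using ruin by auto
  define P where "P = {j\<in>{1..k}. R \<le> Xproc s x j}"
  have "(0::real) \<le> 3 * real k / 4" by simp
  with T have "0 < real (card P)" unfolding P_def by linarith
  then have "card P > 0" by simp
  then obtain j0 where j0: "j0 \<in> P" by (metis card_gt_0_iff ex_in_conv)
  define S where "S = {j. j \<le> n0 \<and> R \<le> Xproc s x j}"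
  have finS: "finite S" unfolding S_def by auto
  have j0S: "j0 \<in> S" using j0 n0 unfolding P_def S_def by auto
  define \<sigma> where "\<sigma> = Max S"
  have sS: "\<sigma> \<in> S" unfolding \<sigma>_def using finS j0S by (intro Max_in) auto
  have sMax: "\<And>j. j \<in> S \<Longrightarrow> j \<le> \<sigma>" unfolding \<sigma>_def using finS by auto
  have Xs: "R \<le> Xproc s x \<sigma>" "\<sigma> \<le> n0" using sS unfolding S_def by auto
  have "\<sigma> \<noteq> n0" using Xs n0 R by auto
  then have sl: "Suc \<sigma> \<le> n0" using Xs by auto
  have XS: "\<not> R \<le> Xproc s x (Suc \<sigma>)"
  proof
    assume "R \<le> Xproc s x (Suc \<sigma>)"
    then have "Suc \<sigma> \<in> S" using sl unfolding S_def by auto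
    then show False using sMax by fastforce
  qed
  have s1: "s (Suc \<sigma>) = 1"
  proof (rule ccontr)
    assume "s (Suc \<sigma>) \<noteq> 1"
    then have "s (Suc \<sigma>) = -1" using s[of "Suc \<sigma>"] by auto
    then have "Xproc s x (Suc \<sigma>) = 2 * Xproc s x \<sigma>" by (rule X_Sucm1)
    then show False using XS Xs R by auto
  qed
  have Xub: "Xproc s x \<sigma> < 2 * R + 1" using XS X_Suc1[of s _ x, OF s1] by auto
  define P' where "P' = {j\<in>{1..\<sigma>}. R \<le> Xproc s x j}"
  define Q where "Q = {j\<in>{1..\<sigma>}. R \<le> Xproc s x (j - 1)}"
  have PP': "P \<subseteq> P'"
  proof
    fix j assume jP: "j \<in> P"
    have "j \<le> n0"
    proof (rule ccontr)
      assume "\<not> j \<le> n0"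
      then have "Xproc s x j \<le> 0" using absorb[OF s n0(2)] by auto
      then show False using jP R unfolding P_def by auto
    qed
    then have "j \<in> S" using jP unfolding P_def S_def by auto
    then show "j \<in> P'" using sMax jP unfolding P_def P'_def by auto
  qed
  have "Suc ` (P' - {\<sigma>}) \<subseteq> Q" unfolding P'_def Q_def by auto
  then have "card (Suc ` (P' - {\<sigma>})) \<le> card Q" by (intro card_mono) (auto simp: Q_def)
  then have c1: "card (P' - {\<sigma>}) \<le> card Q" by (simp add: card_image)
  have "card P \<le> card P'" using PP' by (intro card_mono) (auto simp: P'_def)
  moreover have "card P' \<le> card (P' - {\<sigma>}) + 1"
  proof (cases "\<sigma> \<in> P'")
    case True
    have fP: "finite P'" by (simp add: P'_def)
    have "Suc (card (P' - {\<sigma>})) = card P'" by (rule card_Suc_Diff1[OF fP True])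
    then show ?thesis by simp
  next
    case False
    then have "P' - {\<sigma>} = P'" by simp
    then show ?thesis by simp
  qed
  ultimately have cQ: "card P \<le> card Q + 1" using c1 by linarith
  have NQ: "Ncnt R s x \<sigma> = card Q" unfolding Ncnt_def Q_def ..
  have psi: "ln R + Asum R s x \<sigma> \<le> ln (Xproc s x \<sigma>)"
    using psi_bound[where R=R and s=s and x=x and n=\<sigma>, OF R s] Xs by (simp add: max_def)
  have "ln (Xproc s x \<sigma>) \<le> ln (2 * R + 1)" using Xub Xs R by (intro ln_mono) auto
  then have "Asum R s x \<sigma> \<le> ln (2 * R + 1) - ln R" using psi by linarith
  also have "\<dots> = ln ((2 * R + 1) / R)" using R by (simp add: ln_div)
  also have "\<dots> \<le> ln (5/2)" using R by (intro ln_mono) (auto simp: field_simps)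
  also have "\<dots> \<le> 1" by (rule ln_52)
  finally have A1: "Asum R s x \<sigma> \<le> 1" .
  have "real (card P) - 1 \<le> real (Ncnt R s x \<sigma>)" using cQ NQ by simp
  then have "lm * (3 * real k / 4 - 1) \<le> lm * real (Ncnt R s x \<sigma>)"
    using T lam unfolding P_def by (intro mult_left_mono) auto
  moreover have "\<theta> * Asum R s x \<sigma> \<le> \<theta>" using A1 th by (simp add: mult_le_cancel_left1)
  ultimately have "lm * (3 * real k / 4 - 1) - \<theta> \<le> Lsum R \<theta> lm s x \<sigma>"
    unfolding Lsum_eq by linarith
  then show ?thesis by blast
qed



lemma xi_pm:
  assumes bs: "bet_setup M p x \<xi>" and n: "n \<ge> 1"
  shows "AE \<omega> in M. \<xi> n \<omega> = 1 \<or> \<xi> n \<omega> = -1"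
proof -
  interpret prob_space M by (rule bs_prob[OF bs])
  have [measurable]: "\<xi> n \<in> borel_measurable M" by (rule bs_meas[OF bs n])
  have m1: "prob {\<omega>\<in>space M. \<xi> n \<omega> = 1} = p" and m2: "prob {\<omega>\<in>space M. \<xi> n \<omega> = -1} = 1 - p"
    using bs_m1[OF bs n] bs_m2[OF bs n] by auto
  have "{\<omega>\<in>space M. \<xi> n \<omega> = 1 \<or> \<xi> n \<omega> = -1} = {\<omega>\<in>space M. \<xi> n \<omega> = 1} \<union> {\<omega>\<in>space M. \<xi> n \<omega> = -1}"
    by auto
  moreover have "prob ({\<omega>\<in>space M. \<xi> n \<omega> = 1} \<union> {\<omega>\<in>space M. \<xi> n \<omega> = -1}) = prob {\<omega>\<in>space M. \<xi> n \<omega> = 1} + prob {\<omega>\<in>space M. \<xi> n \<omega> = -1}"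
    by (rule finite_measure_Union) auto
  ultimately have "prob {\<omega>\<in>space M. \<xi> n \<omega> = 1 \<or> \<xi> n \<omega> = -1} = prob {\<omega>\<in>space M. \<xi> n \<omega> = 1} + prob {\<omega>\<in>space M. \<xi> n \<omega> = -1}"
    by simp
  then have "prob {\<omega>\<in>space M. \<xi> n \<omega> = 1 \<or> \<xi> n \<omega> = -1} = 1" using m1 m2 by simp
  then show ?thesis by (subst (asm) prob_Collect_eq_1) auto
qed

lemma xi_integral:
  assumes bs: "bet_setup M p x \<xi>" and n: "n \<ge> 1" and g[measurable]: "g \<in> borel_measurable borel"
  shows "(\<integral>\<omega>. g (\<xi> n \<omega>) \<partial>M) = p * g 1 + (1 - p) * g (-1)"
proof -
  interpret prob_space M by (rule bs_prob[OF bs])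
  have [measurable]: "\<xi> n \<in> borel_measurable M" by (rule bs_meas[OF bs n])
  define A1 where "A1 = {\<omega>\<in>space M. \<xi> n \<omega> = 1}"
  define A2 where "A2 = {\<omega>\<in>space M. \<xi> n \<omega> = -1}"
  have A1m[measurable]: "A1 \<in> sets M" unfolding A1_def by measurable
  have A2m[measurable]: "A2 \<in> sets M" unfolding A2_def by measurable
  have m1: "prob A1 = p" and m2: "prob A2 = 1 - p"
    using bs_m1[OF bs n] bs_m2[OF bs n] unfolding A1_def A2_def by auto
  have i1: "integrable M (indicator A1 :: 'a \<Rightarrow> real)"
    by (rule integrable_real_indicator[OF A1m]) (simp add: less_top[symmetric])
  have i2: "integrable M (indicator A2 :: 'a \<Rightarrow> real)"
    by (rule integrable_real_indicator[OF A2m]) (simp add: less_top[symmetric])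
  have ae: "AE \<omega> in M. g (\<xi> n \<omega>) = g 1 * indicator A1 \<omega> + g (-1) * indicator A2 \<omega>"
    using xi_pm[OF bs n] AE_space by eventually_elim (auto simp: indicator_def A1_def A2_def)
  have mm1: "(\<lambda>\<omega>. g (\<xi> n \<omega>)) \<in> borel_measurable M" by measurable
  have mm2: "(\<lambda>\<omega>. g 1 * indicator A1 \<omega> + g (-1) * indicator A2 \<omega> :: real) \<in> borel_measurable M" by measurable
  have "(\<integral>\<omega>. g (\<xi> n \<omega>) \<partial>M) = (\<integral>\<omega>. g 1 * indicator A1 \<omega> + g (-1) * indicator A2 \<omega> \<partial>M)"
    by (rule integral_cong_AE[OF mm1 mm2 ae])
  also have "\<dots> = (\<integral>\<omega>. g 1 * indicator A1 \<omega> \<partial>M) + (\<integral>\<omega>. g (-1) * indicator A2 \<omega> \<partial>M)"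
    by (rule Bochner_Integration.integral_add[OF integrable_mult_right[OF i1] integrable_mult_right[OF i2]])
  also have "(\<integral>\<omega>. g 1 * indicator A1 \<omega> \<partial>M) = g 1 * prob A1"
    using A1m by (simp add: Int_absorb2 sets.sets_into_space)
  also have "(\<integral>\<omega>. g (-1) * indicator A2 \<omega> \<partial>M) = g (-1) * prob A2"
    using A2m by (simp add: Int_absorb2 sets.sets_into_space)
  finally show ?thesis using m1 m2 by (simp add: mult.commute)
qed

lemma filt_indep:
  assumes bs: "bet_setup M p x \<xi>"
  shows "prob_space.indep_set M (sets (nat_filt M \<xi> n))
           (sigma_sets (space M) {\<xi> (Suc n) -` A \<inter> space M | A. A \<in> sets borel})"
proof -
  interpret prob_space M by (rule bs_prob[OF bs])
  define E where "E i = {\<xi> i -` A \<inter> space M | A. A \<in> sets (borel :: real measure)}" for i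
  have ind: "indep_sets E {1..}"
    using bs_ind[OF bs] unfolding indep_vars_def2 E_def by auto
  define I where "I = (\<lambda>b. if b then {1..n} else {Suc n})"
  have ind2: "indep_sets E (\<Union>j. I j)"
    by (rule indep_sets_mono_index[OF _ ind]) (auto simp: I_def)
  have IS: "Int_stable (E i)" for i
    unfolding Int_stable_def E_def
  proof (safe)
    fix A B :: "real set" assume "A \<in> sets borel" "B \<in> sets borel"
    then show "\<exists>C. \<xi> i -` A \<inter> space M \<inter> (\<xi> i -` B \<inter> space M) = \<xi> i -` C \<inter> space M \<and> C \<in> sets borel"
      by (intro exI[of _ "A \<inter> B"]) auto
  qed
  have dj: "disjoint_family_on I UNIV"
    unfolding disjoint_family_on_def I_def by auto
  have col: "indep_sets (\<lambda>j. sigma_sets (space M) (\<Union>i\<in>I j. E i)) UNIV"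
    by (rule indep_sets_collect_sigma[OF ind2 IS dj])
  have gen: "(\<Union>i\<in>I True. E i) = {\<xi> j -` A \<inter> space M | j A. j \<in> {1..n} \<and> A \<in> sets borel}"
  proof (intro equalityI subsetI)
    fix X assume "X \<in> (\<Union>i\<in>I True. E i)"
    then obtain i where i: "i \<in> {1..n}" "X \<in> E i" by (auto simp: I_def)
    then obtain A where A: "A \<in> sets borel" "X = \<xi> i -` A \<inter> space M" unfolding E_def by blast
    show "X \<in> {\<xi> j -` A \<inter> space M | j A. j \<in> {1..n} \<and> A \<in> sets borel}"
      by (rule CollectI, rule exI[of _ i], rule exI[of _ A]) (use A i in simp)
  next
    fix X assume "X \<in> {\<xi> j -` A \<inter> space M | j A. j \<in> {1..n} \<and> A \<in> sets borel}"
    then obtain j A where jA: "X = \<xi> j -` A \<inter> space M" "j \<in> {1..n}" "A \<in> sets borel" by blast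
    have "X \<in> E j" unfolding E_def by (rule CollectI, rule exI[of _ A]) (use jA in simp)
    moreover have "j \<in> I True" using jA by (simp add: I_def)
    ultimately show "X \<in> (\<Union>i\<in>I True. E i)" by (rule UN_I[rotated])
  qed
  have eT: "sigma_sets (space M) (\<Union>i\<in>I True. E i) = sets (nat_filt M \<xi> n)"
    unfolding filt_sets gen ..
  have eF: "sigma_sets (space M) (\<Union>i\<in>I False. E i) = sigma_sets (space M) {\<xi> (Suc n) -` A \<inter> space M | A. A \<in> sets borel}"
    unfolding I_def E_def by simp
  have "(\<lambda>j. sigma_sets (space M) (\<Union>i\<in>I j. E i)) = case_bool (sets (nat_filt M \<xi> n)) (sigma_sets (space M) {\<xi> (Suc n) -` A \<inter> space M | A. A \<in> sets borel})"
    using eT eF by (auto simp: fun_eq_iff split: bool.split)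
  then show ?thesis using col unfolding indep_set_def by simp
qed

lemma indep_core:
  assumes bs: "bet_setup M p x \<xi>" and h: "h \<in> borel_measurable (nat_filt M \<xi> n)"
    and hb: "\<And>\<omega>. \<bar>h \<omega>\<bar> \<le> K" and g: "g \<in> borel_measurable borel" and gb: "\<And>y. \<bar>g y\<bar> \<le> K'"
  shows "(\<integral>\<omega>. h \<omega> * g (\<xi> (Suc n) \<omega>) \<partial>M) = (\<integral>\<omega>. h \<omega> \<partial>M) * (p * g 1 + (1 - p) * g (-1))"
proof -
  interpret prob_space M by (rule bs_prob[OF bs])
  have xm[measurable]: "\<xi> (Suc n) \<in> borel_measurable M" using bs_meas[OF bs] by simp
  have xim: "\<And>j. j \<ge> 1 \<Longrightarrow> \<xi> j \<in> borel_measurable M" using bs_meas[OF bs] by simp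
  have hM[measurable]: "h \<in> borel_measurable M"
    using measurable_from_subalg[OF filt_subalg[where \<xi>=\<xi> and M=M and n=n, OF xim] h] by blast
  have gm[measurable]: "g \<in> borel_measurable borel" by (rule g)
  have iv2: "indep_var borel h borel (\<lambda>\<omega>. g (\<xi> (Suc n) \<omega>))"
    unfolding indep_var_eq
  proof (intro conjI)
    show "random_variable borel h" by (rule hM)
    show "random_variable borel (\<lambda>\<omega>. g (\<xi> (Suc n) \<omega>))" by measurable
    have s1: "sigma_sets (space M) {h -` A \<inter> space M |A. A \<in> sets borel} \<subseteq> sets (nat_filt M \<xi> n)"
    proof -
      have "{h -` A \<inter> space M |A. A \<in> sets borel} \<subseteq> sets (nat_filt M \<xi> n)"
      proof
        fix X assume "X \<in> {h -` A \<inter> space M |A. A \<in> sets borel}"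
        then obtain A where A: "A \<in> sets borel" "X = h -` A \<inter> space M" by blast
        from measurable_sets[OF h A(1)] show "X \<in> sets (nat_filt M \<xi> n)" using A(2) by simp
      qed
      from sets.sigma_sets_subset[OF this] show ?thesis by simp
    qed
    have s2: "sigma_sets (space M) {(\<lambda>\<omega>. g (\<xi> (Suc n) \<omega>)) -` A \<inter> space M |A. A \<in> sets borel}
       \<subseteq> sigma_sets (space M) {\<xi> (Suc n) -` A \<inter> space M |A. A \<in> sets borel}"
    proof (rule sigma_sets_mono)
      show "{(\<lambda>\<omega>. g (\<xi> (Suc n) \<omega>)) -` A \<inter> space M |A. A \<in> sets borel}
       \<subseteq> sigma_sets (space M) {\<xi> (Suc n) -` A \<inter> space M |A. A \<in> sets borel}"
      proof
        fix B assume "B \<in> {(\<lambda>\<omega>. g (\<xi> (Suc n) \<omega>)) -` A \<inter> space M |A. A \<in> sets borel}"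
        then obtain A where A: "A \<in> sets borel" "B = (\<lambda>\<omega>. g (\<xi> (Suc n) \<omega>)) -` A \<inter> space M" by blast
        have gA: "g -` A \<in> sets borel" using measurable_sets[OF g A(1)] by simp
        have "B = \<xi> (Suc n) -` (g -` A) \<inter> space M" using A(2) by auto
        then have "B \<in> {\<xi> (Suc n) -` A \<inter> space M |A. A \<in> sets borel}"
          by (intro CollectI exI[of _ "g -` A"]) (use gA in simp)
        then show "B \<in> sigma_sets (space M) {\<xi> (Suc n) -` A \<inter> space M |A. A \<in> sets borel}"
          by (rule sigma_sets.Basic)
      qed
    qed
    show "indep_set (sigma_sets (space M) {h -` A \<inter> space M |A. A \<in> sets borel})
       (sigma_sets (space M) {(\<lambda>\<omega>. g (\<xi> (Suc n) \<omega>)) -` A \<inter> space M |A. A \<in> sets borel})"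
      using filt_indep[OF bs, of n] s1 s2 unfolding indep_set_def
      by (rule_tac indep_sets_mono_sets) (auto split: bool.split)
  qed
  have ih: "integrable M h"
    by (rule integrable_const_bound[where B=K]) (use hb in auto)
  have ig: "integrable M (\<lambda>\<omega>. g (\<xi> (Suc n) \<omega>))"
    by (rule integrable_const_bound[where B=K']) (use gb in auto)
  have "(\<integral>\<omega>. h \<omega> * g (\<xi> (Suc n) \<omega>) \<partial>M) = (\<integral>\<omega>. h \<omega> \<partial>M) * (\<integral>\<omega>. g (\<xi> (Suc n) \<omega>) \<partial>M)"
    by (rule indep_var_lebesgue_integral[OF iv2 ih ig])
  also have "(\<integral>\<omega>. g (\<xi> (Suc n) \<omega>) \<partial>M) = p * g 1 + (1 - p) * g (-1)"
    by (rule xi_integral[OF bs _ g]) simp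
  finally show ?thesis .
qed


lemma bet_meas: "m \<le> n \<Longrightarrow> (\<lambda>\<omega>. bet (\<lambda>i. \<xi> i \<omega>) m) \<in> borel_measurable (nat_filt M \<xi> n)"
proof (induction m)
  case 0 then show ?case by simp
next
  case (Suc m)
  have [measurable]: "\<xi> (Suc m) \<in> borel_measurable (nat_filt M \<xi> n)" using Suc.prems by (intro xi_meas_filt) auto
  have [measurable]: "(\<lambda>\<omega>. bet (\<lambda>i. \<xi> i \<omega>) m) \<in> borel_measurable (nat_filt M \<xi> n)" using Suc by simp
  show ?case by simp
qed

lemma wealth_meas: "m \<le> n \<Longrightarrow> (\<lambda>\<omega>. wealth (\<lambda>i. \<xi> i \<omega>) x m) \<in> borel_measurable (nat_filt M \<xi> n)"
proof (induction m)
  case 0 then show ?case by simp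
next
  case (Suc m)
  have [measurable]: "\<xi> (Suc m) \<in> borel_measurable (nat_filt M \<xi> n)" using Suc.prems by (intro xi_meas_filt) auto
  have [measurable]: "(\<lambda>\<omega>. wealth (\<lambda>i. \<xi> i \<omega>) x m) \<in> borel_measurable (nat_filt M \<xi> n)" using Suc by simp
  have [measurable]: "(\<lambda>\<omega>. bet (\<lambda>i. \<xi> i \<omega>) m) \<in> borel_measurable (nat_filt M \<xi> n)" using Suc.prems by (intro bet_meas) simp
  show ?case by simp
qed

lemma X_meas: "m \<le> n \<Longrightarrow> (\<lambda>\<omega>. Xproc (\<lambda>i. \<xi> i \<omega>) x m) \<in> borel_measurable (nat_filt M \<xi> n)"
proof -
  assume mn: "m \<le> n"
  have [measurable]: "(\<lambda>\<omega>. wealth (\<lambda>i. \<xi> i \<omega>) x m) \<in> borel_measurable (nat_filt M \<xi> n)" using mn by (rule wealth_meas)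
  have [measurable]: "(\<lambda>\<omega>. bet (\<lambda>i. \<xi> i \<omega>) m) \<in> borel_measurable (nat_filt M \<xi> n)" using mn by (rule bet_meas)
  show ?thesis unfolding Xproc_def by measurable
qed

lemma ln4: "ln (4::real) = 2 * ln 2"
  using ln_realpow[of "2::real" 2] by simp

definition termf :: "real \<Rightarrow> (nat \<Rightarrow> real) \<Rightarrow> real \<Rightarrow> nat \<Rightarrow> real" where
  "termf p s x j = (if Rconst p \<le> Xproc s x (j - 1)
      then ln (Xproc s x j) - ln (Xproc s x (j - 1)) - (1/2 - p) * ln 2 else 0)"

lemma termf_meas: "1 \<le> j \<Longrightarrow> j \<le> n \<Longrightarrow> (\<lambda>\<omega>. termf p (\<lambda>i. \<xi> i \<omega>) x j) \<in> borel_measurable (nat_filt M \<xi> n)"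
proof -
  assume j: "1 \<le> j" "j \<le> n"
  have [measurable]: "(\<lambda>\<omega>. Xproc (\<lambda>i. \<xi> i \<omega>) x j) \<in> borel_measurable (nat_filt M \<xi> n)" using j by (intro X_meas) simp
  have [measurable]: "(\<lambda>\<omega>. Xproc (\<lambda>i. \<xi> i \<omega>) x (j - 1)) \<in> borel_measurable (nat_filt M \<xi> n)" using j by (intro X_meas) simp
  show ?thesis unfolding termf_def by measurable
qed

lemma Mproc_termf: "Mproc p s x n = (\<Sum>j\<in>{1..n}. termf p s x j)"
  unfolding Mproc_def termf_def ..

lemma Mproc_Suc: "Mproc p s x (Suc n) = Mproc p s x n + termf p s x (Suc n)"
proof -
  have "{1..Suc n} = insert (Suc n) {1..n}" by auto
  then show ?thesis unfolding Mproc_termf by simp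
qed

lemma Mproc_meas: "(\<lambda>\<omega>. Mproc p (\<lambda>i. \<xi> i \<omega>) x n) \<in> borel_measurable (nat_filt M \<xi> n)"
  unfolding Mproc_termf
proof (rule borel_measurable_sum)
  fix j assume "j \<in> {1..n}"
  then show "(\<lambda>\<omega>. termf p (\<lambda>i. \<xi> i \<omega>) x j) \<in> borel_measurable (nat_filt M \<xi> n)"
    by (intro termf_meas) auto
qed

lemma R_ge2: "Rconst p \<ge> 2" unfolding Rconst_def by simp

lemma R_ge: "2 * p / ((1 - 2 * p) * ln 2) + 1 \<le> Rconst p" unfolding Rconst_def by simp

lemma termf_bound:
  assumes p: "0 < p" "p < 1/2" and s: "s (Suc n) = 1 \<or> s (Suc n) = -1"
  shows "\<bar>termf p s x (Suc n)\<bar> \<le> 5 * ln 2 / 2"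
proof (cases "Rconst p \<le> Xproc s x n")
  case False then show ?thesis by (simp add: termf_def)
next
  case True
  let ?X = "Xproc s x n"
  have X2: "?X \<ge> 2" using True R_ge2[of p] by linarith
  have c: "0 \<le> (1/2 - p) * ln 2" "(1/2 - p) * ln 2 \<le> ln 2 / 2" using p by auto
  have l2: "ln (2::real) > 0" by simp
  from s show ?thesis
  proof
    assume s1: "s (Suc n) = 1"
    have e: "Xproc s x (Suc n) = (?X - 1) / 2" by (rule X_Suc1[of s n x, OF s1])
    have pos: "(?X - 1) / 2 > 0" using X2 by simp
    have lo: "ln (?X / 4) \<le> ln ((?X - 1) / 2)" using X2 by (intro ln_mono) auto
    have hi: "ln ((?X - 1) / 2) \<le> ln ?X" using X2 by (intro ln_mono) auto
    have "ln (?X / 4) = ln ?X - 2 * ln 2" using X2 by (simp add: ln_div ln4)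
    moreover have t: "termf p s x (Suc n) = ln ((?X - 1) / 2) - ln ?X - (1/2 - p) * ln 2"
      unfolding termf_def e using True by simp
    ultimately show ?thesis unfolding abs_le_iff using lo hi c by (intro conjI) linarith+
  next
    assume s1: "s (Suc n) = -1"
    have e: "Xproc s x (Suc n) = 2 * ?X" by (rule X_Sucm1[of s n x, OF s1])
    have "ln (2 * ?X) = ln 2 + ln ?X" using X2 by (simp add: ln_mult)
    then have "termf p s x (Suc n) = ln 2 - (1/2 - p) * ln 2" using True e by (simp add: termf_def)
    then show ?thesis unfolding abs_le_iff using c l2 by (intro conjI) linarith+
  qed
qed

definition aF :: "real \<Rightarrow> real \<Rightarrow> real" where
  "aF p X = ln ((X - 1) / 2) - ln X - (1/2 - p) * ln 2"

lemma aF_bound: "X \<ge> 2 \<Longrightarrow> 0 < p \<Longrightarrow> p < 1/2 \<Longrightarrow> \<bar>aF p X\<bar> \<le> 3"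
proof -
  assume X2: "X \<ge> 2" and p: "0 < p" "p < 1/2"
  have lo: "ln (X / 4) \<le> ln ((X - 1) / 2)" using X2 by (intro ln_mono) auto
  have hi: "ln ((X - 1) / 2) \<le> ln X" using X2 by (intro ln_mono) auto
  have "ln (X / 4) = ln X - 2 * ln 2" using X2 by (simp add: ln_div ln4)
  moreover have "ln (2::real) < 1" by (rule ln_2_less_1)
  moreover have "ln (2::real) > 0" by simp
  moreover have "0 \<le> (1/2 - p) * ln 2" "(1/2 - p) * ln 2 \<le> ln 2 / 2" using p by auto
  ultimately show ?thesis using lo hi unfolding aF_def abs_le_iff by (intro conjI) linarith+
qed

lemma gF_nonneg:
  assumes p: "0 < p" "p < 1/2" and X: "Rconst p \<le> X"
  shows "p * aF p X + (1 - p) * (ln 2 - (1/2 - p) * ln 2) \<ge> 0"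
proof -
  have X2: "X \<ge> 2" using X R_ge2[of p] by linarith
  have l2: "ln (2::real) > 0" by simp
  have q: "(1 - 2 * p) * ln 2 > 0" using p by simp
  have Rg: "2 * p / ((1 - 2 * p) * ln 2) \<le> X - 1" using R_ge[of p] X by linarith
  then have "2 * p \<le> (X - 1) * ((1 - 2 * p) * ln 2)" using q by (simp add: divide_le_eq)
  moreover have "(1/2 - p) * ln 2 * (X - 1) = (X - 1) * ((1 - 2 * p) * ln 2) / 2" by (simp add: field_simps)
  ultimately have h2: "p \<le> (1/2 - p) * ln 2 * (X - 1)" by linarith
  have key: "p / (X - 1) \<le> (1/2 - p) * ln 2" using h2 X2 by (subst pos_divide_le_eq) auto
  have "ln (X / (X - 1)) \<le> X / (X - 1) - 1" using X2 by (intro ln_le_minus_one) simp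
  also have "X / (X - 1) - 1 = 1 / (X - 1)" using X2 by (simp add: field_simps)
  finally have lnb: "ln (X / (X - 1)) \<le> 1 / (X - 1)" .
  have eqa: "aF p X = - ln (X / (X - 1)) - ln 2 - (1/2 - p) * ln 2"
    unfolding aF_def using X2 by (simp add: ln_div)
  have "p * aF p X + (1 - p) * (ln 2 - (1/2 - p) * ln 2) = (1/2 - p) * ln 2 - p * ln (X / (X - 1))"
    unfolding eqa by (simp add: field_simps)
  moreover have "p * ln (X / (X - 1)) \<le> p * (1 / (X - 1))" using lnb p by (intro mult_left_mono) auto
  ultimately show ?thesis using key by simp
qed


lemma AE_pm:
  assumes bs: "bet_setup M p x \<xi>"
  shows "AE \<omega> in M. \<forall>j. 1 \<le> j \<longrightarrow> \<xi> j \<omega> = 1 \<or> \<xi> j \<omega> = -1"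
proof -
  have "\<forall>j. AE \<omega> in M. 1 \<le> j \<longrightarrow> \<xi> j \<omega> = 1 \<or> \<xi> j \<omega> = -1"
  proof
    fix j :: nat
    show "AE \<omega> in M. 1 \<le> j \<longrightarrow> \<xi> j \<omega> = 1 \<or> \<xi> j \<omega> = -1"
    proof (cases "1 \<le> j")
      case True then show ?thesis using xi_pm[OF bs True] by simp
    next
      case False then show ?thesis by simp
    qed
  qed
  then show ?thesis unfolding AE_all_countable .
qed

lemma Mproc_bound:
  assumes p: "0 < p" "p < 1/2" and s: "\<forall>j. 1 \<le> j \<longrightarrow> s j = 1 \<or> s j = -1"
  shows "\<bar>Mproc p s x n\<bar> \<le> real n * (5 * ln 2 / 2)"
proof (induction n)
  case 0 then show ?case by (simp add: Mproc_def)
next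
  case (Suc n)
  have "\<bar>termf p s x (Suc n)\<bar> \<le> 5 * ln 2 / 2" using s by (intro termf_bound p) auto
  then show ?case using Suc.IH unfolding Mproc_Suc by (simp add: algebra_simps) (smt (verit) abs_triangle_ineq)
qed

lemma ibound:
  fixes f :: "'a \<Rightarrow> real"
  assumes "finite_measure M" "f \<in> borel_measurable M" "\<And>\<omega>. \<omega> \<in> space M \<Longrightarrow> \<bar>f \<omega>\<bar> \<le> K"
  shows "integrable M f"
  by (rule finite_measure.integrable_const_bound[OF assms(1), where B=K]) (use assms(2,3) in auto)

lemma abs_prod_le:
  fixes a b K :: real
  assumes "\<bar>a\<bar> \<le> K" "\<bar>b\<bar> \<le> 1"
  shows "\<bar>a * b\<bar> \<le> K"
proof -
  have "\<bar>a * b\<bar> = \<bar>a\<bar> * \<bar>b\<bar>" by (rule abs_mult)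
  also have "\<dots> \<le> K * 1" by (rule mult_mono) (use assms in auto)
  finally show ?thesis by simp
qed

lemma sub_step:
  assumes bs: "bet_setup M p x \<xi>"
  shows "AE \<omega> in M. Mproc p (\<lambda>i. \<xi> i \<omega>) x n \<le>
           real_cond_exp M (nat_filt M \<xi> n) (\<lambda>\<omega>. Mproc p (\<lambda>i. \<xi> i \<omega>) x (Suc n)) \<omega>"
proof -
  define F where "F = nat_filt M \<xi> n"
  define R where "R = Rconst p"
  define c where "c = (1/2 - p) * ln 2"
  define Xn where "Xn \<omega> = Xproc (\<lambda>i. \<xi> i \<omega>) x n" for \<omega>
  define Y where "Y \<omega> = Mproc p (\<lambda>i. \<xi> i \<omega>) x n" for \<omega>
  define D where "D \<omega> = termf p (\<lambda>i. \<xi> i \<omega>) x (Suc n)" for \<omega>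
  define h1 where "h1 \<omega> = (if R \<le> Xn \<omega> then aF p (Xn \<omega>) else 0)" for \<omega>
  define h2 where "h2 \<omega> = (if R \<le> Xn \<omega> then ln 2 - c else 0)" for \<omega>
  define gf where "gf \<omega> = p * h1 \<omega> + (1 - p) * h2 \<omega>" for \<omega>
  define v1 where "v1 y = (if y = (1::real) then 1 else (0::real))" for y
  define v2 where "v2 y = (if y = (-1::real) then 1 else (0::real))" for y
  have bsp: "prob_space M" by (rule bs_prob[OF bs])
  interpret prob_space M by (rule bsp)
  have p: "0 < p" "p < 1/2" using bs_p0[OF bs] bs_p1[OF bs] by auto
  have xim: "\<And>j. j \<ge> 1 \<Longrightarrow> \<xi> j \<in> borel_measurable M" using bs_meas[OF bs] by simp
  have subalg: "subalgebra M F" unfolding F_def by (rule filt_subalg[where \<xi>=\<xi> and M=M and n=n, OF xim])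
  have fms: "finite_measure_subalgebra M F"
    by (rule finite_measure_subalgebra.intro[OF finite_measure finite_measure_subalgebra_axioms.intro[OF subalg]])
  have sfs: "sigma_finite_subalgebra M F" by (rule finite_measure_subalgebra_is_sigma_finite[OF fms])
  have fm: "finite_measure M" by (rule finite_measure)
  have XnF[measurable]: "Xn \<in> borel_measurable F" unfolding F_def Xn_def by (rule X_meas) simp
  have YF[measurable]: "Y \<in> borel_measurable F" unfolding F_def Y_def by (rule Mproc_meas)
  have DM[measurable]: "D \<in> borel_measurable M"
  proof -
    have "D \<in> borel_measurable (nat_filt M \<xi> (Suc n))" unfolding D_def by (rule termf_meas) auto
    then show ?thesis using measurable_from_subalg[OF filt_subalg[where \<xi>=\<xi> and M=M and n="Suc n", OF xim]] by blast
  qed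
  have YM[measurable]: "Y \<in> borel_measurable M" using measurable_from_subalg[OF subalg YF] .
  have h1F[measurable]: "h1 \<in> borel_measurable F" unfolding h1_def aF_def R_def by measurable
  have h2F[measurable]: "h2 \<in> borel_measurable F" unfolding h2_def R_def by measurable
  have gfF[measurable]: "gf \<in> borel_measurable F" unfolding gf_def by measurable
  have h1b: "\<bar>h1 \<omega>\<bar> \<le> 3" for \<omega>
    unfolding h1_def using aF_bound[of "Xn \<omega>" p] R_ge2[of p] p unfolding R_def by auto
  have h2b: "\<bar>h2 \<omega>\<bar> \<le> 1" for \<omega>
  proof -
    have "0 \<le> c" "c \<le> ln 2" using p unfolding c_def by auto
    moreover have "ln (2::real) < 1" by (rule ln_2_less_1)
    ultimately show ?thesis unfolding h2_def by auto
  qed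
  have gf_nn: "gf \<omega> \<ge> 0" for \<omega>
    unfolding gf_def h1_def h2_def c_def R_def using gF_nonneg[OF p, of "Xn \<omega>"] by auto
  have pm: "AE \<omega> in M. \<forall>j. 1 \<le> j \<longrightarrow> \<xi> j \<omega> = 1 \<or> \<xi> j \<omega> = -1" by (rule AE_pm[OF bs])
  have iY: "integrable M Y"
  proof (rule integrable_const_bound[where B="real n * (5 * ln 2 / 2)"])
    show "AE \<omega> in M. norm (Y \<omega>) \<le> real n * (5 * ln 2 / 2)"
      using pm
    proof eventually_elim
      case (elim \<omega>)
      show ?case unfolding Y_def real_norm_def by (rule Mproc_bound[OF p elim])
    qed
  qed (rule YM)
  have iD: "integrable M D"
  proof (rule integrable_const_bound[where B="5 * ln 2 / 2"])
    show "AE \<omega> in M. norm (D \<omega>) \<le> 5 * ln 2 / 2"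
      using pm
    proof eventually_elim
      case (elim \<omega>)
      have "\<xi> (Suc n) \<omega> = 1 \<or> \<xi> (Suc n) \<omega> = -1" using elim by simp
      then show ?case unfolding D_def real_norm_def by (rule termf_bound[OF p])
    qed
  qed (rule DM)
  have h1M[measurable]: "h1 \<in> borel_measurable M" using measurable_from_subalg[OF subalg h1F] .
  have h2M[measurable]: "h2 \<in> borel_measurable M" using measurable_from_subalg[OF subalg h2F] .
  have gfM[measurable]: "gf \<in> borel_measurable M" using measurable_from_subalg[OF subalg gfF] .
  have gfb: "\<bar>gf \<omega>\<bar> \<le> 3" for \<omega>
  proof -
    have a: "\<bar>p * h1 \<omega>\<bar> \<le> p * 3" using h1b[of \<omega>] p by (simp add: abs_mult mult_left_mono)
    have b: "\<bar>(1 - p) * h2 \<omega>\<bar> \<le> (1 - p) * 1" using h2b[of \<omega>] p by (simp add: abs_mult mult_left_mono)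
    have "\<bar>gf \<omega>\<bar> \<le> \<bar>p * h1 \<omega>\<bar> + \<bar>(1 - p) * h2 \<omega>\<bar>" unfolding gf_def by (rule abs_triangle_ineq)
    moreover have "p * 3 + (1 - p) * 1 \<le> 3" using p by simp
    ultimately show ?thesis using a b by linarith
  qed
  have igf: "integrable M gf" by (rule ibound[OF fm gfM]) (rule gfb)
  have Dform: "AE \<omega> in M. D \<omega> = h1 \<omega> * v1 (\<xi> (Suc n) \<omega>) + h2 \<omega> * v2 (\<xi> (Suc n) \<omega>)"
    using pm
  proof eventually_elim
    case (elim \<omega>)
    then have s: "\<xi> (Suc n) \<omega> = 1 \<or> \<xi> (Suc n) \<omega> = -1" by simp
    show ?case
    proof (cases "R \<le> Xn \<omega>")
      case False then show ?thesis by (auto simp: D_def termf_def h1_def h2_def Xn_def R_def)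
    next
      case True
      have Xp: "Xn \<omega> > 0" using True R_ge2[of p] unfolding R_def by linarith
      from s show ?thesis
      proof
        assume s1: "\<xi> (Suc n) \<omega> = 1"
        have e: "Xproc (\<lambda>i. \<xi> i \<omega>) x (Suc n) = (Xn \<omega> - 1) / 2"
          unfolding Xn_def by (rule X_Suc1) (use s1 in simp)
        show ?thesis using True s1 unfolding D_def termf_def e h1_def h2_def v1_def v2_def aF_def
          by (simp add: Xn_def R_def)
      next
        assume s1: "\<xi> (Suc n) \<omega> = -1"
        have e: "Xproc (\<lambda>i. \<xi> i \<omega>) x (Suc n) = 2 * Xn \<omega>"
          unfolding Xn_def by (rule X_Sucm1) (use s1 in simp)
        have l: "ln (2 * Xn \<omega>) = ln 2 + ln (Xn \<omega>)" using Xp by (simp add: ln_mult)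
        show ?thesis using True s1 unfolding D_def termf_def e h1_def h2_def v1_def v2_def l
          by (simp add: Xn_def R_def c_def)
      qed
    qed
  qed
  have v1m[measurable]: "v1 \<in> borel_measurable borel" unfolding v1_def by measurable
  have v2m[measurable]: "v2 \<in> borel_measurable borel" unfolding v2_def by measurable
  have v1b: "\<bar>v1 y\<bar> \<le> 1" for y unfolding v1_def by auto
  have v2b: "\<bar>v2 y\<bar> \<le> 1" for y unfolding v2_def by auto
  have xSm[measurable]: "\<xi> (Suc n) \<in> borel_measurable M" using xim by simp
  have intA: "(\<integral>\<omega>\<in>A. D \<omega> \<partial>M) = (\<integral>\<omega>\<in>A. gf \<omega> \<partial>M)" if A: "A \<in> sets F" for A
  proof -
    have AM: "A \<in> sets M" using subalg A unfolding subalgebra_def by auto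
    have iAF[measurable]: "indicator A \<in> borel_measurable F" using A by simp
    have k1F: "(\<lambda>\<omega>. indicator A \<omega> * h1 \<omega>) \<in> borel_measurable F" by measurable
    have k2F: "(\<lambda>\<omega>. indicator A \<omega> * h2 \<omega>) \<in> borel_measurable F" by measurable
    have k1b: "\<bar>indicator A \<omega> * h1 \<omega>\<bar> \<le> 3" for \<omega> using h1b[of \<omega>] by (auto simp: indicator_def)
    have k2b: "\<bar>indicator A \<omega> * h2 \<omega>\<bar> \<le> 1" for \<omega> using h2b[of \<omega>] by (auto simp: indicator_def)
    have k1M[measurable]: "(\<lambda>\<omega>. indicator A \<omega> * h1 \<omega>) \<in> borel_measurable M" using measurable_from_subalg[OF subalg k1F] .
    have k2M[measurable]: "(\<lambda>\<omega>. indicator A \<omega> * h2 \<omega>) \<in> borel_measurable M" using measurable_from_subalg[OF subalg k2F] .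
    have ik1: "integrable M (\<lambda>\<omega>. indicator A \<omega> * h1 \<omega>)" by (rule ibound[OF fm k1M]) (rule k1b)
    have ik2: "integrable M (\<lambda>\<omega>. indicator A \<omega> * h2 \<omega>)" by (rule ibound[OF fm k2M]) (rule k2b)
    have j1M: "(\<lambda>\<omega>. indicator A \<omega> * h1 \<omega> * v1 (\<xi> (Suc n) \<omega>)) \<in> borel_measurable M" by measurable
    have j2M: "(\<lambda>\<omega>. indicator A \<omega> * h2 \<omega> * v2 (\<xi> (Suc n) \<omega>)) \<in> borel_measurable M" by measurable
    have ij1: "integrable M (\<lambda>\<omega>. indicator A \<omega> * h1 \<omega> * v1 (\<xi> (Suc n) \<omega>))"
      by (rule ibound[OF fm j1M, where K=3]) (rule abs_prod_le[OF k1b v1b])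
    have ij2: "integrable M (\<lambda>\<omega>. indicator A \<omega> * h2 \<omega> * v2 (\<xi> (Suc n) \<omega>))"
      by (rule ibound[OF fm j2M, where K=1]) (rule abs_prod_le[OF k2b v2b])
    have "(\<integral>\<omega>\<in>A. D \<omega> \<partial>M) = (\<integral>\<omega>. indicator A \<omega> * D \<omega> \<partial>M)"
      by (simp add: set_lebesgue_integral_def)
    also have "\<dots> = (\<integral>\<omega>. indicator A \<omega> * h1 \<omega> * v1 (\<xi> (Suc n) \<omega>) + indicator A \<omega> * h2 \<omega> * v2 (\<xi> (Suc n) \<omega>) \<partial>M)"
    proof (rule integral_cong_AE)
      show "(\<lambda>\<omega>. indicator A \<omega> * D \<omega>) \<in> borel_measurable M" using AM by measurable
      show "(\<lambda>\<omega>. indicator A \<omega> * h1 \<omega> * v1 (\<xi> (Suc n) \<omega>) + indicator A \<omega> * h2 \<omega> * v2 (\<xi> (Suc n) \<omega>)) \<in> borel_measurable M"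
        by measurable
      show "AE \<omega> in M. indicator A \<omega> * D \<omega> = indicator A \<omega> * h1 \<omega> * v1 (\<xi> (Suc n) \<omega>) + indicator A \<omega> * h2 \<omega> * v2 (\<xi> (Suc n) \<omega>)"
        using Dform by eventually_elim (simp add: algebra_simps)
    qed
    also have "\<dots> = (\<integral>\<omega>. indicator A \<omega> * h1 \<omega> * v1 (\<xi> (Suc n) \<omega>) \<partial>M) + (\<integral>\<omega>. indicator A \<omega> * h2 \<omega> * v2 (\<xi> (Suc n) \<omega>) \<partial>M)"
      by (rule Bochner_Integration.integral_add[OF ij1 ij2])
    also have "(\<integral>\<omega>. indicator A \<omega> * h1 \<omega> * v1 (\<xi> (Suc n) \<omega>) \<partial>M) = (\<integral>\<omega>. indicator A \<omega> * h1 \<omega> \<partial>M) * p"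
      using indep_core[OF bs k1F[unfolded F_def] _ v1m v1b, of 3] k1b by (simp add: v1_def)
    also have "(\<integral>\<omega>. indicator A \<omega> * h2 \<omega> * v2 (\<xi> (Suc n) \<omega>) \<partial>M) = (\<integral>\<omega>. indicator A \<omega> * h2 \<omega> \<partial>M) * (1 - p)"
      using indep_core[OF bs k2F[unfolded F_def] _ v2m v2b, of 1] k2b by (simp add: v2_def)
    also have "(\<integral>\<omega>. indicator A \<omega> * h1 \<omega> \<partial>M) * p + (\<integral>\<omega>. indicator A \<omega> * h2 \<omega> \<partial>M) * (1 - p)
        = (\<integral>\<omega>. indicator A \<omega> * h1 \<omega> * p + indicator A \<omega> * h2 \<omega> * (1 - p) \<partial>M)"
      using ik1 ik2 by simp
    also have "\<dots> = (\<integral>\<omega>\<in>A. gf \<omega> \<partial>M)"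
      by (simp add: set_lebesgue_integral_def gf_def algebra_simps)
    finally show ?thesis .
  qed
  have ceD: "AE \<omega> in M. real_cond_exp M F D \<omega> = gf \<omega>"
    by (rule sigma_finite_subalgebra.real_cond_exp_charact[OF sfs intA iD igf gfF])
  have ceY: "AE \<omega> in M. real_cond_exp M F Y \<omega> = Y \<omega>"
    by (rule sigma_finite_subalgebra.real_cond_exp_F_meas[OF sfs iY YF])
  have ceYD: "AE \<omega> in M. real_cond_exp M F (\<lambda>\<omega>. Y \<omega> + D \<omega>) \<omega> = real_cond_exp M F Y \<omega> + real_cond_exp M F D \<omega>"
    by (rule sigma_finite_subalgebra.real_cond_exp_add[OF sfs iY iD])
  have eqS: "(\<lambda>\<omega>. Mproc p (\<lambda>i. \<xi> i \<omega>) x (Suc n)) = (\<lambda>\<omega>. Y \<omega> + D \<omega>)"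
    unfolding Y_def D_def by (simp add: Mproc_Suc)
  show ?thesis
    unfolding eqS F_def[symmetric] Y_def[symmetric]
    using ceD ceY ceYD by eventually_elim (use gf_nn in auto)
qed


lemma Mproc_int:
  assumes bs: "bet_setup M p x \<xi>"
  shows "integrable M (\<lambda>\<omega>. Mproc p (\<lambda>i. \<xi> i \<omega>) x n)"
proof -
  interpret prob_space M by (rule bs_prob[OF bs])
  have p: "0 < p" "p < 1/2" using bs_p0[OF bs] bs_p1[OF bs] by auto
  have xim: "\<And>j. j \<ge> 1 \<Longrightarrow> \<xi> j \<in> borel_measurable M" using bs_meas[OF bs] by simp
  have YM: "(\<lambda>\<omega>. Mproc p (\<lambda>i. \<xi> i \<omega>) x n) \<in> borel_measurable M"
    using measurable_from_subalg[OF filt_subalg[where \<xi>=\<xi> and M=M and n=n, OF xim] Mproc_meas] .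
  have pm: "AE \<omega> in M. \<forall>j. 1 \<le> j \<longrightarrow> \<xi> j \<omega> = 1 \<or> \<xi> j \<omega> = -1" by (rule AE_pm[OF bs])
  show ?thesis
  proof (rule integrable_const_bound[where B="real n * (5 * ln 2 / 2)"])
    show "AE \<omega> in M. norm (Mproc p (\<lambda>i. \<xi> i \<omega>) x n) \<le> real n * (5 * ln 2 / 2)"
      using pm
    proof eventually_elim
      case (elim \<omega>)
      show ?case unfolding real_norm_def by (rule Mproc_bound[OF p elim])
    qed
  qed (rule YM)
qed

lemma part1:
  assumes bs: "bet_setup M p x \<xi>"
  shows "submartingale M (nat_filt M \<xi>) (\<lambda>n \<omega>. Mproc p (\<lambda>i. \<xi> i \<omega>) x n) \<and>
            (\<forall>n\<ge>1. AE \<omega> in M.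
               \<bar>Mproc p (\<lambda>i. \<xi> i \<omega>) x n - Mproc p (\<lambda>i. \<xi> i \<omega>) x (n - 1)\<bar> \<le> 5 * ln 2 / 2)"
proof
  have xim: "\<And>j. j \<ge> 1 \<Longrightarrow> \<xi> j \<in> borel_measurable M" using bs_meas[OF bs] by simp
  have p: "0 < p" "p < 1/2" using bs_p0[OF bs] bs_p1[OF bs] by auto
  show "submartingale M (nat_filt M \<xi>) (\<lambda>n \<omega>. Mproc p (\<lambda>i. \<xi> i \<omega>) x n)"
    unfolding submartingale_def
  proof (intro conjI allI)
    fix n
    show "subalgebra M (nat_filt M \<xi> n)" by (rule filt_subalg[where \<xi>=\<xi> and M=M and n=n, OF xim])
    show "sets (nat_filt M \<xi> n) \<subseteq> sets (nat_filt M \<xi> (Suc n))" by (rule filt_mono) simp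
    show "integrable M (\<lambda>\<omega>. Mproc p (\<lambda>i. \<xi> i \<omega>) x n)" by (rule Mproc_int[OF bs])
    show "(\<lambda>\<omega>. Mproc p (\<lambda>i. \<xi> i \<omega>) x n) \<in> borel_measurable (nat_filt M \<xi> n)" by (rule Mproc_meas)
    show "AE \<omega> in M. Mproc p (\<lambda>i. \<xi> i \<omega>) x n \<le>
           real_cond_exp M (nat_filt M \<xi> n) (\<lambda>\<omega>. Mproc p (\<lambda>i. \<xi> i \<omega>) x (Suc n)) \<omega>"
      by (rule sub_step[OF bs])
  qed
  show "\<forall>n\<ge>1. AE \<omega> in M.
          \<bar>Mproc p (\<lambda>i. \<xi> i \<omega>) x n - Mproc p (\<lambda>i. \<xi> i \<omega>) x (n - 1)\<bar> \<le> 5 * ln 2 / 2"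
  proof (intro allI impI)
    fix n :: nat assume n: "n \<ge> 1"
    then obtain m where m: "n = Suc m" by (cases n) auto
    show "AE \<omega> in M. \<bar>Mproc p (\<lambda>i. \<xi> i \<omega>) x n - Mproc p (\<lambda>i. \<xi> i \<omega>) x (n - 1)\<bar> \<le> 5 * ln 2 / 2"
      using AE_pm[OF bs]
    proof eventually_elim
      case (elim \<omega>)
      have "\<xi> (Suc m) \<omega> = 1 \<or> \<xi> (Suc m) \<omega> = -1" using elim by simp
      then have "\<bar>termf p (\<lambda>i. \<xi> i \<omega>) x (Suc m)\<bar> \<le> 5 * ln 2 / 2" by (rule termf_bound[OF p])
      then show ?case unfolding m by (simp add: Mproc_Suc)
    qed
  qed
qed


fun Wf :: "real \<Rightarrow> real \<Rightarrow> real \<Rightarrow> real \<Rightarrow> (nat \<Rightarrow> real) \<Rightarrow> real \<Rightarrow> nat \<Rightarrow> real" where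
  "Wf R \<theta> lm L s x 0 = 0"
| "Wf R \<theta> lm L s x (Suc n) = (if L \<le> Wf R \<theta> lm L s x n then Wf R \<theta> lm L s x n
     else Wf R \<theta> lm L s x n + (if R \<le> Xproc s x n then lm - \<theta> * stepf R (s (Suc n)) else 0))"

lemma Lsum_Suc: "Lsum R \<theta> lm s x (Suc n) = Lsum R \<theta> lm s x n + (if R \<le> Xproc s x n then lm - \<theta> * stepf R (s (Suc n)) else 0)"
proof -
  have "{1..Suc n} = insert (Suc n) {1..n}" by auto
  then show ?thesis unfolding Lsum_def by simp
qed

lemma Wf_prop: "Wf R \<theta> lm L s x n < L \<longrightarrow> (Wf R \<theta> lm L s x n = Lsum R \<theta> lm s x n \<and> (\<forall>i\<le>n. Lsum R \<theta> lm s x i < L))"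
proof (induction n)
  case 0 then show ?case by (simp add: Lsum_def)
next
  case (Suc n)
  show ?case
  proof
    assume a: "Wf R \<theta> lm L s x (Suc n) < L"
    have nl: "\<not> L \<le> Wf R \<theta> lm L s x n"
    proof
      assume "L \<le> Wf R \<theta> lm L s x n"
      then have "Wf R \<theta> lm L s x (Suc n) = Wf R \<theta> lm L s x n" by simp
      then show False using a \<open>L \<le> Wf R \<theta> lm L s x n\<close> by simp
    qed
    then have ih: "Wf R \<theta> lm L s x n = Lsum R \<theta> lm s x n" "\<forall>i\<le>n. Lsum R \<theta> lm s x i < L" using Suc.IH by auto
    have e: "Wf R \<theta> lm L s x (Suc n) = Lsum R \<theta> lm s x (Suc n)" using nl ih(1) by (simp add: Lsum_Suc)
    have "\<forall>i\<le>Suc n. Lsum R \<theta> lm s x i < L"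
    proof (intro allI impI)
      fix i assume "i \<le> Suc n"
      then show "Lsum R \<theta> lm s x i < L"
        using ih(2) e a by (cases "i = Suc n") auto
    qed
    then show "Wf R \<theta> lm L s x (Suc n) = Lsum R \<theta> lm s x (Suc n) \<and> (\<forall>i\<le>Suc n. Lsum R \<theta> lm s x i < L)"
      using e by simp
  qed
qed

lemma Wf_hit: "L \<le> Lsum R \<theta> lm s x \<sigma> \<Longrightarrow> L \<le> Wf R \<theta> lm L s x \<sigma>"
  using Wf_prop[of R \<theta> lm L s x \<sigma>] by force

lemma Wf_mono: "L \<le> Wf R \<theta> lm L s x n \<Longrightarrow> L \<le> Wf R \<theta> lm L s x (Suc n)"
  by simp

lemma stepf_bound: "\<bar>stepf R y\<bar> \<le> ln 2 + \<bar>ln (2 * R / (R - 1))\<bar>"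
  unfolding stepf_def by auto

lemma Wf_bound: "\<bar>Wf R \<theta> lm L s x n\<bar> \<le> real n * (\<bar>lm\<bar> + \<bar>\<theta>\<bar> * (ln 2 + \<bar>ln (2 * R / (R - 1))\<bar>))"
proof (induction n)
  case 0 then show ?case by simp
next
  case (Suc n)
  let ?K = "\<bar>lm\<bar> + \<bar>\<theta>\<bar> * (ln 2 + \<bar>ln (2 * R / (R - 1))\<bar>)"
  have st: "\<bar>\<theta> * stepf R (s (Suc n))\<bar> \<le> \<bar>\<theta>\<bar> * (ln 2 + \<bar>ln (2 * R / (R - 1))\<bar>)"
    unfolding abs_mult by (intro mult_left_mono stepf_bound) simp
  have inc: "\<bar>(if R \<le> Xproc s x n then lm - \<theta> * stepf R (s (Suc n)) else 0)\<bar> \<le> ?K"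
    using st by auto
  have K0: "0 \<le> ?K" by simp
  have sK: "real (Suc n) * ?K = real n * ?K + ?K" by (simp add: algebra_simps)
  show ?case
  proof (cases "L \<le> Wf R \<theta> lm L s x n")
    case True
    then have "Wf R \<theta> lm L s x (Suc n) = Wf R \<theta> lm L s x n" by simp
    then show ?thesis using Suc.IH K0 sK by linarith
  next
    case False
    then have e: "Wf R \<theta> lm L s x (Suc n) = Wf R \<theta> lm L s x n + (if R \<le> Xproc s x n then lm - \<theta> * stepf R (s (Suc n)) else 0)" by simp
    have "\<bar>Wf R \<theta> lm L s x (Suc n)\<bar> \<le> \<bar>Wf R \<theta> lm L s x n\<bar> + \<bar>(if R \<le> Xproc s x n then lm - \<theta> * stepf R (s (Suc n)) else 0)\<bar>"
      unfolding e by (rule abs_triangle_ineq)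
    then show ?thesis using Suc.IH inc sK by linarith
  qed
qed

lemma Wf_meas: "m \<le> n \<Longrightarrow> (\<lambda>\<omega>. Wf R \<theta> lm L (\<lambda>i. \<xi> i \<omega>) x m) \<in> borel_measurable (nat_filt M \<xi> n)"
proof (induction m)
  case 0 then show ?case by simp
next
  case (Suc m)
  have [measurable]: "\<xi> (Suc m) \<in> borel_measurable (nat_filt M \<xi> n)" using Suc.prems by (intro xi_meas_filt) auto
  have [measurable]: "(\<lambda>\<omega>. Wf R \<theta> lm L (\<lambda>i. \<xi> i \<omega>) x m) \<in> borel_measurable (nat_filt M \<xi> n)" using Suc by simp
  have [measurable]: "(\<lambda>\<omega>. Xproc (\<lambda>i. \<xi> i \<omega>) x m) \<in> borel_measurable (nat_filt M \<xi> n)" using Suc.prems by (intro X_meas) simp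
  show ?case unfolding Wf.simps stepf_def by measurable
qed


lemma Wf_exp_step:
  assumes bs: "bet_setup M p x \<xi>"
    and vcond: "p * exp (lm - \<theta> * stepf R 1) + (1 - p) * exp (lm - \<theta> * stepf R (-1)) \<le> 1"
  shows "(\<integral>\<omega>. exp (Wf R \<theta> lm L (\<lambda>i. \<xi> i \<omega>) x (Suc n)) \<partial>M) \<le> (\<integral>\<omega>. exp (Wf R \<theta> lm L (\<lambda>i. \<xi> i \<omega>) x n) \<partial>M)"
proof -
  interpret prob_space M by (rule bs_prob[OF bs])
  have fm: "finite_measure M" by (rule finite_measure)
  have xim: "\<And>j. j \<ge> 1 \<Longrightarrow> \<xi> j \<in> borel_measurable M" using bs_meas[OF bs] by simp
  have subalg: "subalgebra M (nat_filt M \<xi> n)" by (rule filt_subalg[where \<xi>=\<xi> and M=M and n=n, OF xim])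
  define K where "K = \<bar>lm\<bar> + \<bar>\<theta>\<bar> * (ln 2 + \<bar>ln (2 * R / (R - 1))\<bar>)"
  define W where "W \<omega> = Wf R \<theta> lm L (\<lambda>i. \<xi> i \<omega>) x n" for \<omega>
  define G where "G \<omega> = (L \<le> W \<omega> \<or> \<not> R \<le> Xproc (\<lambda>i. \<xi> i \<omega>) x n)" for \<omega>
  define h1 where "h1 \<omega> = (if G \<omega> then exp (W \<omega>) else 0)" for \<omega>
  define h2 where "h2 \<omega> = (if G \<omega> then 0 else exp (W \<omega>))" for \<omega>
  define v where "v y = exp (lm - \<theta> * stepf R y)" for y
  have WF[measurable]: "W \<in> borel_measurable (nat_filt M \<xi> n)" unfolding W_def by (rule Wf_meas) simp
  have XF[measurable]: "(\<lambda>\<omega>. Xproc (\<lambda>i. \<xi> i \<omega>) x n) \<in> borel_measurable (nat_filt M \<xi> n)" by (rule X_meas) simp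
  have h1F[measurable]: "h1 \<in> borel_measurable (nat_filt M \<xi> n)" unfolding h1_def G_def by measurable
  have h2F[measurable]: "h2 \<in> borel_measurable (nat_filt M \<xi> n)" unfolding h2_def G_def by measurable
  have vm[measurable]: "v \<in> borel_measurable borel" unfolding v_def stepf_def by measurable
  have xSm[measurable]: "\<xi> (Suc n) \<in> borel_measurable M" using xim by simp
  have h1M[measurable]: "h1 \<in> borel_measurable M" using measurable_from_subalg[OF subalg h1F] .
  have h2M[measurable]: "h2 \<in> borel_measurable M" using measurable_from_subalg[OF subalg h2F] .
  have Wb: "\<bar>W \<omega>\<bar> \<le> real n * K" for \<omega> unfolding W_def K_def by (rule Wf_bound)
  have eW: "exp (W \<omega>) \<le> exp (real n * K)" for \<omega> using Wb[of \<omega>] by simp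
  have h1b: "\<bar>h1 \<omega>\<bar> \<le> exp (real n * K)" for \<omega> using eW[of \<omega>] unfolding h1_def by auto
  have h2b: "\<bar>h2 \<omega>\<bar> \<le> exp (real n * K)" for \<omega> using eW[of \<omega>] unfolding h2_def by auto
  have vb: "\<bar>v y\<bar> \<le> exp (\<bar>lm\<bar> + \<bar>\<theta>\<bar> * (ln 2 + \<bar>ln (2 * R / (R - 1))\<bar>))" for y
  proof -
    have "\<bar>\<theta> * stepf R y\<bar> \<le> \<bar>\<theta>\<bar> * (ln 2 + \<bar>ln (2 * R / (R - 1))\<bar>)"
      unfolding abs_mult by (intro mult_left_mono stepf_bound) simp
    then have "lm - \<theta> * stepf R y \<le> \<bar>lm\<bar> + \<bar>\<theta>\<bar> * (ln 2 + \<bar>ln (2 * R / (R - 1))\<bar>)" by linarith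
    then show ?thesis unfolding v_def by simp
  qed
  have pw: "exp (Wf R \<theta> lm L (\<lambda>i. \<xi> i \<omega>) x (Suc n)) = h1 \<omega> + h2 \<omega> * v (\<xi> (Suc n) \<omega>)" for \<omega>
  proof (cases "G \<omega>")
    case True
    then have "Wf R \<theta> lm L (\<lambda>i. \<xi> i \<omega>) x (Suc n) = W \<omega>" unfolding G_def W_def by auto
    then show ?thesis using True unfolding h1_def h2_def by simp
  next
    case False
    then have "Wf R \<theta> lm L (\<lambda>i. \<xi> i \<omega>) x (Suc n) = W \<omega> + (lm - \<theta> * stepf R (\<xi> (Suc n) \<omega>))"
      unfolding G_def W_def by auto
    then show ?thesis using False unfolding h1_def h2_def v_def by (simp add: exp_add)
  qed
  have pw0: "exp (W \<omega>) = h1 \<omega> + h2 \<omega>" for \<omega> unfolding h1_def h2_def by simp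
  have ih1: "integrable M h1" by (rule ibound[OF fm h1M]) (rule h1b)
  have ih2: "integrable M h2" by (rule ibound[OF fm h2M]) (rule h2b)
  have j2M: "(\<lambda>\<omega>. h2 \<omega> * v (\<xi> (Suc n) \<omega>)) \<in> borel_measurable M" by measurable
  have ij2: "integrable M (\<lambda>\<omega>. h2 \<omega> * v (\<xi> (Suc n) \<omega>))"
  proof (rule ibound[OF fm j2M, where K="exp (real n * K) * exp (\<bar>lm\<bar> + \<bar>\<theta>\<bar> * (ln 2 + \<bar>ln (2 * R / (R - 1))\<bar>))"])
    fix \<omega>
    show "\<bar>h2 \<omega> * v (\<xi> (Suc n) \<omega>)\<bar> \<le> exp (real n * K) * exp (\<bar>lm\<bar> + \<bar>\<theta>\<bar> * (ln 2 + \<bar>ln (2 * R / (R - 1))\<bar>))"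
      unfolding abs_mult by (rule mult_mono[OF h2b vb]) auto
  qed
  have h2nn: "0 \<le> (\<integral>\<omega>. h2 \<omega> \<partial>M)" by (rule integral_nonneg_AE) (simp add: h2_def)
  have "(\<integral>\<omega>. exp (Wf R \<theta> lm L (\<lambda>i. \<xi> i \<omega>) x (Suc n)) \<partial>M) = (\<integral>\<omega>. h1 \<omega> + h2 \<omega> * v (\<xi> (Suc n) \<omega>) \<partial>M)"
    by (simp only: pw)
  also have "\<dots> = (\<integral>\<omega>. h1 \<omega> \<partial>M) + (\<integral>\<omega>. h2 \<omega> * v (\<xi> (Suc n) \<omega>) \<partial>M)"
    by (rule Bochner_Integration.integral_add[OF ih1 ij2])
  also have "(\<integral>\<omega>. h2 \<omega> * v (\<xi> (Suc n) \<omega>) \<partial>M) = (\<integral>\<omega>. h2 \<omega> \<partial>M) * (p * v 1 + (1 - p) * v (-1))"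
    by (rule indep_core[OF bs h2F h2b vm vb])
  also have "\<dots> \<le> (\<integral>\<omega>. h2 \<omega> \<partial>M) * 1"
    using vcond h2nn unfolding v_def by (intro mult_left_mono) auto
  also have "(\<integral>\<omega>. h1 \<omega> \<partial>M) + (\<integral>\<omega>. h2 \<omega> \<partial>M) * 1 = (\<integral>\<omega>. h1 \<omega> + h2 \<omega> \<partial>M)"
    using ih1 ih2 by simp
  also have "\<dots> = (\<integral>\<omega>. exp (W \<omega>) \<partial>M)" by (simp only: pw0)
  finally show ?thesis unfolding W_def by simp
qed

lemma Wf_exp_le1:
  assumes bs: "bet_setup M p x \<xi>"
    and vcond: "p * exp (lm - \<theta> * stepf R 1) + (1 - p) * exp (lm - \<theta> * stepf R (-1)) \<le> 1"
  shows "(\<integral>\<omega>. exp (Wf R \<theta> lm L (\<lambda>i. \<xi> i \<omega>) x n) \<partial>M) \<le> 1"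
proof (induction n)
  case 0
  interpret prob_space M by (rule bs_prob[OF bs])
  show ?case by (simp add: prob_space)
next
  case (Suc n)
  then show ?case using Wf_exp_step[OF bs vcond, of L n] by linarith
qed

lemma Wf_tail:
  assumes bs: "bet_setup M p x \<xi>"
    and vcond: "p * exp (lm - \<theta> * stepf R 1) + (1 - p) * exp (lm - \<theta> * stepf R (-1)) \<le> 1"
  shows "measure M (\<Union>n. {\<omega>\<in>space M. L \<le> Wf R \<theta> lm L (\<lambda>i. \<xi> i \<omega>) x n}) \<le> exp (- L)"
proof -
  interpret prob_space M by (rule bs_prob[OF bs])
  have xim: "\<And>j. j \<ge> 1 \<Longrightarrow> \<xi> j \<in> borel_measurable M" using bs_meas[OF bs] by simp
  define H where "H n = {\<omega>\<in>space M. L \<le> Wf R \<theta> lm L (\<lambda>i. \<xi> i \<omega>) x n}" for n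
  have WM: "(\<lambda>\<omega>. Wf R \<theta> lm L (\<lambda>i. \<xi> i \<omega>) x n) \<in> borel_measurable M" for n
    using measurable_from_subalg[OF filt_subalg[where \<xi>=\<xi> and M=M and n=n, OF xim] Wf_meas[OF order_refl]] .
  have Hm: "H n \<in> sets M" for n
  proof -
    have [measurable]: "(\<lambda>\<omega>. Wf R \<theta> lm L (\<lambda>i. \<xi> i \<omega>) x n) \<in> borel_measurable M" by (rule WM)
    show ?thesis unfolding H_def by measurable
  qed
  have Hb: "measure M (H n) \<le> exp (- L)" for n
  proof -
    have [measurable]: "(\<lambda>\<omega>. Wf R \<theta> lm L (\<lambda>i. \<xi> i \<omega>) x n) \<in> borel_measurable M" by (rule WM)
    have ie: "integrable M (\<lambda>\<omega>. exp (Wf R \<theta> lm L (\<lambda>i. \<xi> i \<omega>) x n))"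
    proof (rule ibound[OF finite_measure, where K="exp (real n * (\<bar>lm\<bar> + \<bar>\<theta>\<bar> * (ln 2 + \<bar>ln (2 * R / (R - 1))\<bar>)))"])
      show "(\<lambda>\<omega>. exp (Wf R \<theta> lm L (\<lambda>i. \<xi> i \<omega>) x n)) \<in> borel_measurable M" by measurable
      fix \<omega>
      show "\<bar>exp (Wf R \<theta> lm L (\<lambda>i. \<xi> i \<omega>) x n)\<bar> \<le> exp (real n * (\<bar>lm\<bar> + \<bar>\<theta>\<bar> * (ln 2 + \<bar>ln (2 * R / (R - 1))\<bar>)))"
        using Wf_bound[of R \<theta> lm L "\<lambda>i. \<xi> i \<omega>" x n] by simp
    qed
    have "H n = {\<omega>\<in>space M. exp L \<le> exp (Wf R \<theta> lm L (\<lambda>i. \<xi> i \<omega>) x n)}" unfolding H_def by simp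
    then have "measure M (H n) \<le> (\<integral>\<omega>. exp (Wf R \<theta> lm L (\<lambda>i. \<xi> i \<omega>) x n) \<partial>M) / exp L"
      using integral_Markov_inequality_measure[OF ie, of "space M" "exp L"] by simp
    also have "\<dots> \<le> 1 / exp L"
      using Wf_exp_le1[OF bs vcond, of L n] by (intro divide_right_mono) auto
    finally show ?thesis by (simp add: exp_minus field_simps)
  qed
  have inc: "incseq H"
  proof (rule incseq_SucI)
    fix n show "H n \<subseteq> H (Suc n)" unfolding H_def using Wf_mono by auto
  qed
  have "(\<lambda>n. measure M (H n)) \<longlonglongrightarrow> measure M (\<Union>n. H n)"
    by (rule Lim_measure_incseq) (use Hm inc in auto)
  then have "measure M (\<Union>n. H n) \<le> exp (- L)"
    by (rule LIMSEQ_le_const2) (use Hb in auto)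
  then show ?thesis unfolding H_def .
qed


lemma key_ineq:
  assumes p: "0 < p" "p < 1/2"
  shows "p * exp ((1 - 2 * p) / 20 * ln (2 * Rconst p / (Rconst p - 1)))
          + (1 - p) * exp (- ((1 - 2 * p) / 20 * ln 2)) \<le> 1 - (1 - 2 * p)^2 / 200"
proof -
  define q where "q = 1 - 2 * p"
  define t where "t = q / 20"
  define R where "R = Rconst p"
  define b where "b = ln (2 * R / (R - 1))"
  define l where "l = ln (2::real)"
  have q: "0 < q" "q \<le> 1" using p unfolding q_def by auto
  have R2: "R \<ge> 2" unfolding R_def by (rule R_ge2)
  have Rg: "2 * p / (q * l) + 1 \<le> R" unfolding R_def q_def l_def by (rule R_ge)
  have l: "2/3 \<le> l" "l < 1" unfolding l_def by (rule ln2_ge_two_thirds, rule ln_2_less_1)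
  have ql: "q * l > 0" using q l by simp
  have "2 * p / (q * l) \<le> R - 1" using Rg by linarith
  then have h1: "2 * p \<le> (R - 1) * (q * l)" using ql by (simp add: divide_le_eq)
  have h1': "p * 2 \<le> q * l * (R - 1)" using h1 by (simp add: mult.commute)
  have pR: "p / (R - 1) \<le> q * l / 2" using h1' R2 by (subst pos_divide_le_eq) auto
  have "ln (R / (R - 1)) \<le> R / (R - 1) - 1" using R2 by (intro ln_le_minus_one) simp
  also have "R / (R - 1) - 1 = 1 / (R - 1)" using R2 by (simp add: field_simps)
  finally have lnr: "ln (R / (R - 1)) \<le> 1 / (R - 1)" .
  have lnr0: "0 \<le> ln (R / (R - 1))" using R2 by simp
  have inv1: "1 / (R - 1) \<le> 1" using R2 by simp
  have b_eq: "b = l + ln (R / (R - 1))"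
  proof -
    have "2 * R / (R - 1) = 2 * (R / (R - 1))" by simp
    then have "b = ln (2 * (R / (R - 1)))" unfolding b_def by simp
    also have "\<dots> = ln 2 + ln (R / (R - 1))" using ln_mult[of 2 "R / (R - 1)"] R2 by simp
    finally show ?thesis unfolding l_def .
  qed
  have b0: "0 \<le> b" using b_eq l lnr0 by linarith
  have b2: "b \<le> 2" using b_eq l lnr inv1 by linarith
  have "p * ln (R / (R - 1)) \<le> p * (1 / (R - 1))" using lnr p by (intro mult_left_mono) auto
  moreover have "p * (1 / (R - 1)) = p / (R - 1)" by simp
  moreover have "p * b = p * l + p * ln (R / (R - 1))" unfolding b_eq by (simp add: algebra_simps)
  ultimately have pb: "p * b \<le> p * l + q * l / 2" using pR by linarith
  have t0: "0 \<le> t" "t \<le> 1/20" using q unfolding t_def by auto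
  have tb: "0 \<le> t * b" "t * b \<le> 1"
  proof -
    show "0 \<le> t * b" using t0 b0 by simp
    have "t * b \<le> (1/20) * 2" using t0 b0 b2 by (intro mult_mono) auto
    then show "t * b \<le> 1" by simp
  qed
  have F1: "exp (t * b) \<le> 1 + t * b + (t * b)^2" by (rule exp_bound[OF tb])
  define u where "u = t * l"
  have u0: "0 \<le> u" unfolding u_def using t0 l by simp
  have F2: "exp (- u) \<le> 1 - u + u^2"
  proof -
    have e1: "exp (- u) = 1 / exp u" by (simp add: exp_minus field_simps)
    have "1 + u \<le> exp u" by (rule exp_ge_add_one_self)
    then have e2: "1 / exp u \<le> 1 / (1 + u)" using u0 by (intro divide_left_mono) auto
    have e: "(1 - u + u^2) * (1 + u) = 1 + u^3" by (simp add: algebra_simps power2_eq_square power3_eq_cube)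
    have "0 \<le> u^3" using u0 by simp
    then have "1 \<le> (1 - u + u^2) * (1 + u)" using e by simp
    then have "1 / (1 + u) \<le> 1 - u + u^2" using u0 by (subst pos_divide_le_eq) auto
    then show ?thesis using e1 e2 by linarith
  qed
  have A: "p * exp (t * b) + (1 - p) * exp (- u) \<le> p * (1 + t * b + (t * b)^2) + (1 - p) * (1 - u + u^2)"
    using F1 F2 p by (intro add_mono mult_left_mono) auto
  have B: "p * (1 + t * b + (t * b)^2) + (1 - p) * (1 - u + u^2) = 1 + t * (p * b - (1 - p) * l) + t^2 * (p * b^2 + (1 - p) * l^2)"
    unfolding u_def by (simp add: algebra_simps power2_eq_square)
  have qle: "q * l = l - 2 * (p * l)" unfolding q_def by (simp add: algebra_simps)
  have ple: "(1 - p) * l = l - p * l" by (simp add: algebra_simps)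
  have c0: "p * b - (1 - p) * l \<le> - (q * l / 2)" using pb qle ple by linarith
  have C: "t * (p * b - (1 - p) * l) \<le> t * (- (q * l / 2))" using c0 t0 by (intro mult_left_mono) auto
  have bb: "b^2 \<le> 2^2" using b0 b2 by (intro power_mono) auto
  have ll: "l^2 \<le> 1^2" using l by (intro power_mono) auto
  have d1: "p * b^2 \<le> 4 * p" using mult_left_mono[OF bb, of p] p by simp
  have d2: "(1 - p) * l^2 \<le> 1 - p" using mult_left_mono[OF ll, of "1 - p"] p by simp
  have d0: "p * b^2 + (1 - p) * l^2 \<le> 4" using d1 d2 p by linarith
  have D: "t^2 * (p * b^2 + (1 - p) * l^2) \<le> t^2 * 4" using d0 by (intro mult_left_mono) auto
  have E: "t * (q * l / 2) - t^2 * 4 - q^2 / 200 = q^2 * (l / 40 - 3 / 200)"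
    unfolding t_def by (simp add: algebra_simps power2_eq_square)
  have E0: "0 \<le> q^2 * (l / 40 - 3 / 200)" using l by (intro mult_nonneg_nonneg) auto
  have "p * exp (t * b) + (1 - p) * exp (- u) \<le> 1 - q^2 / 200"
    using A B C D E E0 by linarith
  then show ?thesis unfolding u_def t_def b_def l_def q_def R_def by simp
qed


lemma final_num:
  fixes q \<theta> lm :: real and k :: nat
  assumes q: "0 < q" "q \<le> 1" and th: "\<theta> \<le> 1" and lm: "q^2 / 200 \<le> lm" "lm \<le> 1"
  shows "exp (- (lm * (3 * real k / 4 - 1) - \<theta>)) \<le> exp 2 / q^2 * exp (- (3/800) * q^3 * real k)"
proof -
  have k0: "0 \<le> 3 * real k / 4" by simp
  have "(q^2 / 200) * (3 * real k / 4) \<le> lm * (3 * real k / 4)" using lm(1) k0 by (rule mult_right_mono)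
  moreover have "q^3 \<le> q^2"
  proof -
    have "q^3 = q^2 * q" by (simp add: power3_eq_cube power2_eq_square)
    also have "\<dots> \<le> q^2 * 1" using q by (intro mult_left_mono) auto
    finally show ?thesis by simp
  qed
  then have "(3/800) * q^3 * real k \<le> (3/800) * q^2 * real k" by (intro mult_right_mono) auto
  moreover have "(q^2 / 200) * (3 * real k / 4) = (3/800) * q^2 * real k" by simp
  ultimately have h: "- (lm * (3 * real k / 4 - 1) - \<theta>) \<le> 2 + (- (3/800) * q^3 * real k)"
    using th lm by (simp add: algebra_simps)
  have "exp (- (lm * (3 * real k / 4 - 1) - \<theta>)) \<le> exp (2 + (- (3/800) * q^3 * real k))"
    using h by simp
  also have "\<dots> = exp 2 * exp (- (3/800) * q^3 * real k)" by (rule exp_add)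
  also have "\<dots> \<le> exp 2 / q^2 * exp (- (3/800) * q^3 * real k)"
  proof (rule mult_right_mono)
    have q2: "0 < q^2" "q^2 \<le> 1" using q by (auto simp: power_le_one)
    then have "1 \<le> 1 / q^2" by simp
    then have "exp 2 * 1 \<le> exp 2 * (1 / q^2)" by (intro mult_left_mono) auto
    then show "exp 2 \<le> exp 2 / q^2" by simp
  qed simp
  finally show ?thesis .
qed

lemma part2:
  shows "\<exists>C>0. \<exists>\<beta>>0. \<forall>(M :: 'a measure) p x \<xi>. bet_setup M p x \<xi> \<longrightarrow>
            (\<forall>k\<ge>1. measure M {\<omega>\<in>space M.
                 real (Tcount p (\<lambda>i. \<xi> i \<omega>) x k) > 3 * real k / 4 \<and>
                 (\<exists>n\<ge>k. Xproc (\<lambda>i. \<xi> i \<omega>) x n \<le> 0)}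
               \<le> C / (1 - 2 * p)^2 * exp (- \<beta> * (1 - 2 * p)^3 * real k))"
proof (rule exI[where x="exp 2"], rule conjI, simp, rule exI[where x="3/800::real"], rule conjI, simp, intro allI impI)
  fix M :: "'a measure" and p x \<xi> and k :: nat
  assume bs: "bet_setup M p x \<xi>" and k: "1 \<le> k"
  interpret prob_space M by (rule bs_prob[OF bs])
  have p: "0 < p" "p < 1/2" using bs_p0[OF bs] bs_p1[OF bs] by auto
  have x2: "x > 2" by (rule bs_x[OF bs])
  have xim: "\<And>j. j \<ge> 1 \<Longrightarrow> \<xi> j \<in> borel_measurable M" using bs_meas[OF bs] by simp
  define q where "q = 1 - 2 * p"
  define \<theta> where "\<theta> = q / 20"
  define \<rho> where "\<rho> = 1 - q^2 / 200"
  define lm where "lm = - ln \<rho>"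
  define R where "R = Rconst p"
  define L where "L = lm * (3 * real k / 4 - 1) - \<theta>"
  have q: "0 < q" "q \<le> 1" using p unfolding q_def by auto
  have q2: "0 < q^2" "q^2 \<le> 1" using q by (auto simp: power_le_one)
  have rho: "0 < \<rho>" "\<rho> < 1" "1/2 \<le> \<rho>" using q2 unfolding \<rho>_def by auto
  have th: "0 < \<theta>" "\<theta> \<le> 1" using q unfolding \<theta>_def by auto
  have lm_lo: "q^2 / 200 \<le> lm"
  proof -
    have "ln \<rho> \<le> \<rho> - 1" using rho by (intro ln_le_minus_one) auto
    then show ?thesis unfolding lm_def \<rho>_def by simp
  qed
  have lm_pos: "0 < lm" using lm_lo q2 by linarith
  have lm_hi: "lm \<le> 1"
  proof -
    have "ln (1/2) \<le> ln \<rho>" using rho by (intro ln_mono) auto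
    moreover have "ln (1/2::real) = - ln 2" by (simp add: ln_div)
    moreover have "ln (2::real) < 1" by (rule ln_2_less_1)
    ultimately show ?thesis unfolding lm_def by linarith
  qed
  have elm: "exp lm = 1 / \<rho>" unfolding lm_def using rho by (simp add: exp_minus exp_ln inverse_eq_divide)
  have vcond: "p * exp (lm - \<theta> * stepf R 1) + (1 - p) * exp (lm - \<theta> * stepf R (-1)) \<le> 1"
  proof -
    have s1: "stepf R 1 = - ln (2 * R / (R - 1))" unfolding stepf_def by simp
    have s2: "stepf R (-1) = ln 2" unfolding stepf_def by simp
    have "p * exp (lm - \<theta> * stepf R 1) + (1 - p) * exp (lm - \<theta> * stepf R (-1))
        = exp lm * (p * exp (\<theta> * ln (2 * R / (R - 1))) + (1 - p) * exp (- (\<theta> * ln 2)))"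
    proof -
      have a1: "lm - \<theta> * stepf R 1 = lm + \<theta> * ln (2 * R / (R - 1))" unfolding s1 by simp
      have a2: "lm - \<theta> * stepf R (-1) = lm + (- (\<theta> * ln 2))" unfolding s2 by simp
      show ?thesis unfolding a1 a2 exp_add by (simp add: algebra_simps)
    qed
    also have "\<dots> \<le> exp lm * \<rho>"
      using key_ineq[OF p] unfolding \<theta>_def q_def R_def \<rho>_def by (intro mult_left_mono) auto
    also have "\<dots> = 1" using elm rho by simp
    finally show ?thesis .
  qed
  define H where "H = (\<Union>n. {\<omega>\<in>space M. L \<le> Wf R \<theta> lm L (\<lambda>i. \<xi> i \<omega>) x n})"
  have Hm: "H \<in> sets M"
  proof -
    have "{\<omega>\<in>space M. L \<le> Wf R \<theta> lm L (\<lambda>i. \<xi> i \<omega>) x n} \<in> sets M" for n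
    proof -
      have [measurable]: "(\<lambda>\<omega>. Wf R \<theta> lm L (\<lambda>i. \<xi> i \<omega>) x n) \<in> borel_measurable M"
        using measurable_from_subalg[OF filt_subalg[where \<xi>=\<xi> and M=M and n=n, OF xim] Wf_meas[OF order_refl]] .
      show ?thesis by measurable
    qed
    then show ?thesis unfolding H_def by (intro sets.countable_UN) auto
  qed
  have incl: "AE \<omega> in M. \<omega> \<in> {\<omega>\<in>space M.
                 real (Tcount p (\<lambda>i. \<xi> i \<omega>) x k) > 3 * real k / 4 \<and>
                 (\<exists>n\<ge>k. Xproc (\<lambda>i. \<xi> i \<omega>) x n \<le> 0)} \<longrightarrow> \<omega> \<in> H"
    using AE_pm[OF bs]
  proof eventually_elim
    case (elim \<omega>)
    show ?case
    proof
      assume "\<omega> \<in> {\<omega>\<in>space M. real (Tcount p (\<lambda>i. \<xi> i \<omega>) x k) > 3 * real k / 4 \<and>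
                 (\<exists>n\<ge>k. Xproc (\<lambda>i. \<xi> i \<omega>) x n \<le> 0)}"
      then have sp: "\<omega> \<in> space M" and T: "real (Tcount p (\<lambda>i. \<xi> i \<omega>) x k) > 3 * real k / 4"
        and ruin: "\<exists>n\<ge>k. Xproc (\<lambda>i. \<xi> i \<omega>) x n \<le> 0" by auto
      have s: "\<And>j. j \<ge> 1 \<Longrightarrow> \<xi> j \<omega> = 1 \<or> \<xi> j \<omega> = -1" using elim by simp
      have T': "real (card {j\<in>{1..k}. R \<le> Xproc (\<lambda>i. \<xi> i \<omega>) x j}) > 3 * real k / 4"
        using T unfolding Tcount_def R_def .
      obtain \<sigma> where "lm * (3 * real k / 4 - 1) - \<theta> \<le> Lsum R \<theta> lm (\<lambda>i. \<xi> i \<omega>) x \<sigma>"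
        using pw_main[where R=R and s="\<lambda>i. \<xi> i \<omega>", OF _ s lm_pos th(1) x2 T' ruin] R_ge2[of p]
        unfolding R_def by blast
      then have "L \<le> Wf R \<theta> lm L (\<lambda>i. \<xi> i \<omega>) x \<sigma>" unfolding L_def by (rule Wf_hit)
      then show "\<omega> \<in> H" unfolding H_def using sp by blast
    qed
  qed
  have "measure M {\<omega>\<in>space M.
                 real (Tcount p (\<lambda>i. \<xi> i \<omega>) x k) > 3 * real k / 4 \<and>
                 (\<exists>n\<ge>k. Xproc (\<lambda>i. \<xi> i \<omega>) x n \<le> 0)} \<le> measure M H"
    by (rule finite_measure_mono_AE[OF incl Hm])
  also have "\<dots> \<le> exp (- L)" unfolding H_def by (rule Wf_tail[OF bs vcond])
  also have "\<dots> \<le> exp 2 / q^2 * exp (- (3/800) * q^3 * real k)"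
    unfolding L_def by (rule final_num[OF q th(2) lm_lo lm_hi])
  finally show "measure M {\<omega>\<in>space M.
                 real (Tcount p (\<lambda>i. \<xi> i \<omega>) x k) > 3 * real k / 4 \<and>
                 (\<exists>n\<ge>k. Xproc (\<lambda>i. \<xi> i \<omega>) x n \<le> 0)}
               \<le> exp 2 / (1 - 2 * p)^2 * exp (- (3/800) * (1 - 2 * p)^3 * real k)"
    unfolding q_def .
qed


theorem lemma3p2:
  shows "(\<forall>(M :: 'a measure) p x \<xi>. bet_setup M p x \<xi> \<longrightarrow>
            submartingale M (nat_filt M \<xi>) (\<lambda>n \<omega>. Mproc p (\<lambda>i. \<xi> i \<omega>) x n) \<and>
            (\<forall>n\<ge>1. AE \<omega> in M.
               \<bar>Mproc p (\<lambda>i. \<xi> i \<omega>) x n - Mproc p (\<lambda>i. \<xi> i \<omega>) x (n - 1)\<bar> \<le> 5 * ln 2 / 2))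
       \<and> (\<exists>C>0. \<exists>\<beta>>0. \<forall>(M :: 'a measure) p x \<xi>. bet_setup M p x \<xi> \<longrightarrow>
            (\<forall>k\<ge>1. measure M {\<omega>\<in>space M.
                 real (Tcount p (\<lambda>i. \<xi> i \<omega>) x k) > 3 * real k / 4 \<and>
                 (\<exists>n\<ge>k. Xproc (\<lambda>i. \<xi> i \<omega>) x n \<le> 0)}
               \<le> C / (1 - 2 * p)^2 * exp (- \<beta> * (1 - 2 * p)^3 * real k)))"
  proof (rule conjI)
  show "\<forall>(M :: 'a measure) p x \<xi>. bet_setup M p x \<xi> \<longrightarrow>
            submartingale M (nat_filt M \<xi>) (\<lambda>n \<omega>. Mproc p (\<lambda>i. \<xi> i \<omega>) x n) \<and>
            (\<forall>n\<ge>1. AE \<omega> in M.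
               \<bar>Mproc p (\<lambda>i. \<xi> i \<omega>) x n - Mproc p (\<lambda>i. \<xi> i \<omega>) x (n - 1)\<bar> \<le> 5 * ln 2 / 2)"
    by (intro allI impI) (rule part1)
  show "\<exists>C>0. \<exists>\<beta>>0. \<forall>(M :: 'a measure) p x \<xi>. bet_setup M p x \<xi> \<longrightarrow>
            (\<forall>k\<ge>1. measure M {\<omega>\<in>space M.
                 real (Tcount p (\<lambda>i. \<xi> i \<omega>) x k) > 3 * real k / 4 \<and>
                 (\<exists>n\<ge>k. Xproc (\<lambda>i. \<xi> i \<omega>) x n \<le> 0)}
               \<le> C / (1 - 2 * p)^2 * exp (- \<beta> * (1 - 2 * p)^3 * real k))"
    by (rule part2)
qed

end
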